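(* Let $\mathfrak C$ be a monster model of a complete theory $T$. Let $p(\bar x)\in S(\emptyset)$ with $\bar x$ short, $q\in S_p(\mathfrak C)$, $M\prec\mathfrak C$ a small model, and $\bar\alpha$ a tuple in $\mathfrak C$ realizing $q|_M$. Let $B:=A_{q|_{\bar\alpha},\bar\alpha}=\{\sigma\in\mathrm{Aut}(\mathfrak C):\sigma(\bar\alpha)\models q|_{\bar\alpha}\}$. Then $B\,B\,B^{-1}B^{-1}\bar\alpha:=\{\sigma(\bar\alpha):\sigma\in BBB^{-1}B^{-1}\}\subseteq\{\bar\beta\subseteq\mathfrak C:d_L(\bar\alpha,\bar\beta)\le 4\}\subseteq[\bar\alpha]_{E_L}$.
   Context: $\mathfrak C$ is $\kappa$-saturated and strongly $\kappa$-homogeneous ($\kappa$ large); small/short means of size $<\kappa$. $S_p(\mathfrak C)=\{q\in S_{\bar x}(\mathfrak C):p\subseteq q\}$; $q|_M$ and $q|_{\bar\alpha}$ denote the restrictions of $q$ to types over $M$ and over (the set enumerated by) $\bar\alpha$. The Lascar distance $d_L(\bar\alpha,\bar\beta)$ is the least $n$ such that there are $\bar\alpha_0=\bar\alpha,\dots,\bar\alpha_n=\bar\beta$ and small models $M_0,\dots,M_{n-1}$ with $\bar\alpha_i\equiv_{M_i}\bar\alpha_{i+1}$; $E_L$ is the Lascar strong type relation, i.e. the orbit equivalence relation of the group generated by automorphisms fixing pointwise some small submodel, and $[\bar\alpha]_{E_L}$ is the class of $\bar\alpha$. *)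

theory Defs
  imports Main "HOL-Library.Extended_Nat"
begin

text \<open>Terms and formulas over function symbols 'f, relation symbols 'r, variables 'v,
  and parameters (constants naming elements) of type 'a.\<close>

datatype ('f, 'v, 'a) trm = Var 'v | Par 'a | Fn 'f "('f, 'v, 'a) trm list"

datatype ('f, 'r, 'v, 'a) fm =
    Eq "('f, 'v, 'a) trm" "('f, 'v, 'a) trm"
  | Rel 'r "('f, 'v, 'a) trm list"
  | Neg "('f, 'r, 'v, 'a) fm"
  | Conj "('f, 'r, 'v, 'a) fm" "('f, 'r, 'v, 'a) fm"
  | Ex 'v "('f, 'r, 'v, 'a) fm"

record ('a, 'f, 'r) struc =
  univ :: "'a set"
  fint :: "'f \<Rightarrow> 'a list \<Rightarrow> 'a"
  rint :: "'r \<Rightarrow> 'a list \<Rightarrow> bool"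
  farity :: "'f \<Rightarrow> nat"
  rarity :: "'r \<Rightarrow> nat"

fun wft :: "('a, 'f, 'r) struc \<Rightarrow> ('f, 'v, 'a) trm \<Rightarrow> bool" where
  "wft S (Var v) = True"
| "wft S (Par a) = True"
| "wft S (Fn f ts) = (length ts = farity S f \<and> (\<forall>t\<in>set ts. wft S t))"

fun wff :: "('a, 'f, 'r) struc \<Rightarrow> ('f, 'r, 'v, 'a) fm \<Rightarrow> bool" where
  "wff S (Eq s t) = (wft S s \<and> wft S t)"
| "wff S (Rel r ts) = (length ts = rarity S r \<and> (\<forall>t\<in>set ts. wft S t))"
| "wff S (Neg \<phi>) = wff S \<phi>"
| "wff S (Conj \<phi> \<psi>) = (wff S \<phi> \<and> wff S \<psi>)"
| "wff S (Ex v \<phi>) = wff S \<phi>"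

fun fvt :: "('f, 'v, 'a) trm \<Rightarrow> 'v set" where
  "fvt (Var v) = {v}"
| "fvt (Par a) = {}"
| "fvt (Fn f ts) = (\<Union>t\<in>set ts. fvt t)"

fun fv :: "('f, 'r, 'v, 'a) fm \<Rightarrow> 'v set" where
  "fv (Eq s t) = fvt s \<union> fvt t"
| "fv (Rel r ts) = (\<Union>t\<in>set ts. fvt t)"
| "fv (Neg \<phi>) = fv \<phi>"
| "fv (Conj \<phi> \<psi>) = fv \<phi> \<union> fv \<psi>"
| "fv (Ex v \<phi>) = fv \<phi> - {v}"

fun parst :: "('f, 'v, 'a) trm \<Rightarrow> 'a set" where
  "parst (Var v) = {}"
| "parst (Par a) = {a}"
| "parst (Fn f ts) = (\<Union>t\<in>set ts. parst t)"

fun params :: "('f, 'r, 'v, 'a) fm \<Rightarrow> 'a set" where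
  "params (Eq s t) = parst s \<union> parst t"
| "params (Rel r ts) = (\<Union>t\<in>set ts. parst t)"
| "params (Neg \<phi>) = params \<phi>"
| "params (Conj \<phi> \<psi>) = params \<phi> \<union> params \<psi>"
| "params (Ex v \<phi>) = params \<phi>"

fun evt :: "('a, 'f, 'r) struc \<Rightarrow> ('v \<Rightarrow> 'a) \<Rightarrow> ('f, 'v, 'a) trm \<Rightarrow> 'a" where
  "evt S e (Var v) = e v"
| "evt S e (Par a) = a"
| "evt S e (Fn f ts) = fint S f (map (evt S e) ts)"

fun sat :: "('a, 'f, 'r) struc \<Rightarrow> ('v \<Rightarrow> 'a) \<Rightarrow> ('f, 'r, 'v, 'a) fm \<Rightarrow> bool" where
  "sat S e (Eq s t) = (evt S e s = evt S e t)"
| "sat S e (Rel r ts) = rint S r (map (evt S e) ts)"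
| "sat S e (Neg \<phi>) = (\<not> sat S e \<phi>)"
| "sat S e (Conj \<phi> \<psi>) = (sat S e \<phi> \<and> sat S e \<psi>)"
| "sat S e (Ex v \<phi>) = (\<exists>b\<in>univ S. sat S (e(v := b)) \<phi>)"

definition struct_ok :: "('a, 'f, 'r) struc \<Rightarrow> bool" where
  "struct_ok S \<longleftrightarrow> univ S \<noteq> {} \<and>
     (\<forall>f xs. set xs \<subseteq> univ S \<longrightarrow> length xs = farity S f \<longrightarrow> fint S f xs \<in> univ S)"

definition elem_sub :: "('a, 'f, 'r) struc \<Rightarrow> 'a set \<Rightarrow> bool" where
  "elem_sub C M \<longleftrightarrow> M \<subseteq> univ C \<and> M \<noteq> {} \<and>
     (\<forall>f xs. set xs \<subseteq> M \<longrightarrow> length xs = farity C f \<longrightarrow> fint C f xs \<in> M) \<and>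
     (\<forall>(\<phi> :: ('f, 'r, nat, 'a) fm) e. wff C \<phi> \<longrightarrow> params \<phi> \<subseteq> M \<longrightarrow> range e \<subseteq> M \<longrightarrow>
        (sat (C\<lparr>univ := M\<rparr>) e \<phi> \<longleftrightarrow> sat C e \<phi>))"

definition aut :: "('a, 'f, 'r) struc \<Rightarrow> ('a \<Rightarrow> 'a) \<Rightarrow> bool" where
  "aut C \<sigma> \<longleftrightarrow> bij_betw \<sigma> (univ C) (univ C) \<and>
     (\<forall>f xs. set xs \<subseteq> univ C \<longrightarrow> length xs = farity C f \<longrightarrow>
        \<sigma> (fint C f xs) = fint C f (map \<sigma> xs)) \<and>
     (\<forall>r xs. set xs \<subseteq> univ C \<longrightarrow> length xs = rarity C r \<longrightarrow>
        (rint C r (map \<sigma> xs) \<longleftrightarrow> rint C r xs))"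

text \<open>A tuple indexed by 'i; the formulas of a type in x-bar use variables of type
  'i + nat, where Inl i is the variable x_i and Inr n are auxiliary variables.\<close>

definition tup_asg :: "('a, 'f, 'r) struc \<Rightarrow> ('i \<Rightarrow> 'a) \<Rightarrow> ('i + nat \<Rightarrow> 'a)" where
  "tup_asg C b = case_sum b (\<lambda>_. SOME x. x \<in> univ C)"

definition lform :: "('a, 'f, 'r) struc \<Rightarrow> 'a set \<Rightarrow> ('f, 'r, 'i + nat, 'a) fm \<Rightarrow> bool" where
  "lform C A \<phi> \<longleftrightarrow> wff C \<phi> \<and> fv \<phi> \<subseteq> range Inl \<and> params \<phi> \<subseteq> A"

text \<open>Complete type over A in the variables x-bar (consistency with Th(C_A) = finite
  satisfiability in C).\<close>
definition ctype :: "('a, 'f, 'r) struc \<Rightarrow> 'a set \<Rightarrow> ('f, 'r, 'i + nat, 'a) fm set \<Rightarrow> bool" where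
  "ctype C A q \<longleftrightarrow> (\<forall>\<phi>\<in>q. lform C A \<phi>) \<and>
     (\<forall>F. finite F \<longrightarrow> F \<subseteq> q \<longrightarrow> (\<exists>e. range e \<subseteq> univ C \<and> (\<forall>\<phi>\<in>F. sat C e \<phi>))) \<and>
     (\<forall>\<phi>. lform C A \<phi> \<longrightarrow> \<phi> \<in> q \<or> Neg \<phi> \<in> q)"

definition realizes :: "('a, 'f, 'r) struc \<Rightarrow> ('f, 'r, 'i + nat, 'a) fm set \<Rightarrow> ('i \<Rightarrow> 'a) \<Rightarrow> bool" where
  "realizes C q b \<longleftrightarrow> range b \<subseteq> univ C \<and> (\<forall>\<phi>\<in>q. sat C (tup_asg C b) \<phi>)"

definition restr :: "('f, 'r, 'v, 'a) fm set \<Rightarrow> 'a set \<Rightarrow> ('f, 'r, 'v, 'a) fm set" where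
  "restr q A = {\<phi> \<in> q. params \<phi> \<subseteq> A}"

definition tp_eq :: "('a, 'f, 'r) struc \<Rightarrow> 'a set \<Rightarrow> ('i \<Rightarrow> 'a) \<Rightarrow> ('i \<Rightarrow> 'a) \<Rightarrow> bool" where
  "tp_eq C A a b \<longleftrightarrow> (\<forall>\<phi> :: ('f, 'r, 'i + nat, 'a) fm. lform C A \<phi> \<longrightarrow>
      (sat C (tup_asg C a) \<phi> \<longleftrightarrow> sat C (tup_asg C b) \<phi>))"

definition small :: "'k rel \<Rightarrow> 'b set \<Rightarrow> bool" where
  "small \<kappa> X \<longleftrightarrow> (card_of X, \<kappa>) \<in> ordLess"

definition saturated :: "'k rel \<Rightarrow> ('a, 'f, 'r) struc \<Rightarrow> bool" where
  "saturated \<kappa> C \<longleftrightarrow> (\<forall>A (q :: ('f, 'r, unit + nat, 'a) fm set).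
      A \<subseteq> univ C \<longrightarrow> small \<kappa> A \<longrightarrow> ctype C A q \<longrightarrow> (\<exists>b. realizes C q b))"

definition partial_elem :: "('a, 'f, 'r) struc \<Rightarrow> 'a set \<Rightarrow> ('a \<Rightarrow> 'a) \<Rightarrow> bool" where
  "partial_elem C A f \<longleftrightarrow> (\<forall>(\<phi> :: ('f, 'r, nat, 'a) fm) e. wff C \<phi> \<longrightarrow> params \<phi> = {} \<longrightarrow>
      range e \<subseteq> A \<longrightarrow> (sat C e \<phi> \<longleftrightarrow> sat C (f \<circ> e) \<phi>))"

definition strongly_homogeneous :: "'k rel \<Rightarrow> ('a, 'f, 'r) struc \<Rightarrow> bool" where
  "strongly_homogeneous \<kappa> C \<longleftrightarrow> (\<forall>A f. A \<subseteq> univ C \<longrightarrow> small \<kappa> A \<longrightarrow> f ` A \<subseteq> univ C \<longrightarrow>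
      partial_elem C A f \<longrightarrow> (\<exists>\<sigma>. aut C \<sigma> \<and> (\<forall>x\<in>A. \<sigma> x = f x)))"

text \<open>kappa is an (infinite) cardinal larger than the language.\<close>
definition monster :: "('a, 'f, 'r) struc \<Rightarrow> 'k rel \<Rightarrow> bool" where
  "monster C \<kappa> \<longleftrightarrow> struct_ok C \<and> Card_order \<kappa> \<and>
     small \<kappa> (UNIV :: nat set) \<and> small \<kappa> (UNIV :: 'f set) \<and> small \<kappa> (UNIV :: 'r set) \<and>
     saturated \<kappa> C \<and> strongly_homogeneous \<kappa> C"

definition lascar_chain :: "('a, 'f, 'r) struc \<Rightarrow> 'k rel \<Rightarrow> ('i \<Rightarrow> 'a) \<Rightarrow> ('i \<Rightarrow> 'a) \<Rightarrow> nat \<Rightarrow> bool" where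
  "lascar_chain C \<kappa> a b n \<longleftrightarrow> (\<exists>(as :: nat \<Rightarrow> 'i \<Rightarrow> 'a) Ms.
      as 0 = a \<and> as n = b \<and> (\<forall>i\<le>n. range (as i) \<subseteq> univ C) \<and>
      (\<forall>i<n. elem_sub C (Ms i) \<and> small \<kappa> (Ms i) \<and> tp_eq C (Ms i) (as i) (as (Suc i))))"

definition dL :: "('a, 'f, 'r) struc \<Rightarrow> 'k rel \<Rightarrow> ('i \<Rightarrow> 'a) \<Rightarrow> ('i \<Rightarrow> 'a) \<Rightarrow> enat" where
  "dL C \<kappa> a b = (if \<exists>n. lascar_chain C \<kappa> a b n
                   then enat (LEAST n. lascar_chain C \<kappa> a b n) else \<infinity>)"

inductive_set autfL :: "('a, 'f, 'r) struc \<Rightarrow> 'k rel \<Rightarrow> ('a \<Rightarrow> 'a) set"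
  for C :: "('a, 'f, 'r) struc" and \<kappa> :: "'k rel" where
  fix_model: "aut C \<sigma> \<Longrightarrow> elem_sub C M \<Longrightarrow> small \<kappa> M \<Longrightarrow> (\<forall>x\<in>M. \<sigma> x = x) \<Longrightarrow> \<sigma> \<in> autfL C \<kappa>"
| ident: "id \<in> autfL C \<kappa>"
| comp: "\<sigma> \<in> autfL C \<kappa> \<Longrightarrow> \<tau> \<in> autfL C \<kappa> \<Longrightarrow> \<sigma> \<circ> \<tau> \<in> autfL C \<kappa>"
| inv: "\<sigma> \<in> autfL C \<kappa> \<Longrightarrow> inv_into (univ C) \<sigma> \<in> autfL C \<kappa>"

definition EL :: "('a, 'f, 'r) struc \<Rightarrow> 'k rel \<Rightarrow> ('i \<Rightarrow> 'a) \<Rightarrow> ('i \<Rightarrow> 'a) \<Rightarrow> bool" where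
  "EL C \<kappa> a b \<longleftrightarrow> (\<exists>\<sigma>\<in>autfL C \<kappa>. b = \<sigma> \<circ> a)"

definition A_set :: "('a, 'f, 'r) struc \<Rightarrow> ('f, 'r, 'i + nat, 'a) fm set \<Rightarrow> ('i \<Rightarrow> 'a) \<Rightarrow> ('a \<Rightarrow> 'a) set" where
  "A_set C r a = {\<sigma>. aut C \<sigma> \<and> realizes C r (\<sigma> \<circ> a)}"

end

theory Submission
  imports Defs
begin

lemma evt_upd: "x \<notin> fvt t \<Longrightarrow> evt S (e(x:=b)) t = evt S e t"
  by (induction t) (auto intro!: arg_cong[where f="fint S _"])

lemma evt_cong: "(\<forall>v\<in>fvt t. e v = e' v) \<Longrightarrow> evt S e t = evt S e' t"
  by (induction t) (auto intro!: arg_cong[where f="fint S _"])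

lemma sat_cong: "(\<forall>v\<in>fv \<phi>. e v = e' v) \<Longrightarrow> sat S e \<phi> = sat S e' \<phi>"
proof (induction \<phi> arbitrary: e e')
  case (Eq s t) then show ?case by (simp add: evt_cong[of s e e'] evt_cong[of t e e'])
next
  case (Rel r ts)
  have "map (evt S e) ts = map (evt S e') ts" using Rel by (auto intro: evt_cong)
  then show ?case by (metis sat.simps(2))
next
  case (Ex v \<phi>)
  have "\<And>b. sat S (e(v:=b)) \<phi> = sat S (e'(v:=b)) \<phi>"
    by (rule Ex.IH) (use Ex.prems in auto)
  then show ?case by simp
next
  case (Conj \<phi>1 \<phi>2)
  show ?case using Conj.IH(1)[of e e'] Conj.IH(2)[of e e'] Conj.prems by auto
qed auto

fun trt :: "('v \<Rightarrow> ('f, 'w, 'a) trm) \<Rightarrow> ('f, 'v, 'a) trm \<Rightarrow> ('f, 'w, 'a) trm" where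
  "trt \<sigma> (Var v) = \<sigma> v"
| "trt \<sigma> (Par a) = Par a"
| "trt \<sigma> (Fn f ts) = Fn f (map (trt \<sigma>) ts)"

fun trf :: "(nat \<Rightarrow> 'w) \<Rightarrow> nat \<Rightarrow> ('v \<Rightarrow> ('f, 'w, 'a) trm) \<Rightarrow> ('f, 'r, 'v, 'a) fm \<Rightarrow> ('f, 'r, 'w, 'a) fm" where
  "trf fr d \<sigma> (Eq s t) = Eq (trt \<sigma> s) (trt \<sigma> t)"
| "trf fr d \<sigma> (Rel r ts) = Rel r (map (trt \<sigma>) ts)"
| "trf fr d \<sigma> (Neg \<phi>) = Neg (trf fr d \<sigma> \<phi>)"
| "trf fr d \<sigma> (Conj \<phi> \<psi>) = Conj (trf fr d \<sigma> \<phi>) (trf fr d \<sigma> \<psi>)"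
| "trf fr d \<sigma> (Ex v \<phi>) = Ex (fr d) (trf fr (Suc d) (\<sigma>(v := Var (fr d))) \<phi>)"

lemma evt_trt: "(\<forall>v\<in>fvt t. evt S e2 (\<sigma> v) = e1 v) \<Longrightarrow> evt S e2 (trt \<sigma> t) = evt S e1 t"
  by (induction t) (auto intro!: arg_cong[where f="fint S _"])

lemma sat_trf:
  assumes "inj fr"
  shows "(\<forall>v\<in>fv \<phi>. evt S e2 (\<sigma> v) = e1 v \<and> (\<forall>d'\<ge>d. fr d' \<notin> fvt (\<sigma> v)))
     \<Longrightarrow> sat S e2 (trf fr d \<sigma> \<phi>) = sat S e1 \<phi>"
proof (induction \<phi> arbitrary: d \<sigma> e1 e2)
  case (Eq s t) then show ?case by (simp add: evt_trt[of s S e2 \<sigma> e1] evt_trt[of t S e2 \<sigma> e1])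
next
  case (Rel r ts)
  have "map (evt S e2 \<circ> trt \<sigma>) ts = map (evt S e1) ts" using Rel by (auto intro: evt_trt)
  then show ?case by (metis sat.simps(2) trf.simps(2) map_map)
next
  case (Ex v \<phi>)
  have "sat S (e2(fr d := b)) (trf fr (Suc d) (\<sigma>(v := Var (fr d))) \<phi>) = sat S (e1(v:=b)) \<phi>" for b
  proof (rule Ex.IH, intro ballI conjI allI impI)
    fix w d' assume w: "w \<in> fv \<phi>"
    show "evt S (e2(fr d := b)) ((\<sigma>(v := Var (fr d))) w) = (e1(v := b)) w"
    proof (cases "w = v")
      case False
      then have "w \<in> fv (Ex v \<phi>)" using w by simp
      then have "evt S e2 (\<sigma> w) = e1 w" "fr d \<notin> fvt (\<sigma> w)" using Ex.prems by auto
      then show ?thesis using False by (simp add: evt_upd)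
    qed simp
    assume "Suc d \<le> d'"
    show "fr d' \<notin> fvt ((\<sigma>(v := Var (fr d))) w)"
    proof (cases "w = v")
      case True then show ?thesis using \<open>Suc d \<le> d'\<close> assms by (auto dest: injD)
    next
      case False
      then have "w \<in> fv (Ex v \<phi>)" using w by simp
      then show ?thesis using False Ex.prems \<open>Suc d \<le> d'\<close> by auto
    qed
  qed
  then show ?case by simp
next
  case (Conj \<phi>1 \<phi>2)
  have "sat S e2 (trf fr d \<sigma> \<phi>1) = sat S e1 \<phi>1" by (rule Conj.IH(1)) (use Conj.prems in auto)
  moreover have "sat S e2 (trf fr d \<sigma> \<phi>2) = sat S e1 \<phi>2" by (rule Conj.IH(2)) (use Conj.prems in auto)
  ultimately show ?case by simp
qed auto

lemma fvt_trt: "fvt (trt \<sigma> t) = (\<Union>v\<in>fvt t. fvt (\<sigma> v))"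
  by (induction t) auto

lemma parst_trt: "parst (trt \<sigma> t) = parst t \<union> (\<Union>v\<in>fvt t. parst (\<sigma> v))"
  by (induction t) auto

lemma wft_trt: "(\<forall>v. wft S (\<sigma> v)) \<Longrightarrow> wft S t \<Longrightarrow> wft S (trt \<sigma> t)"
  by (induction t) auto

lemma fv_trf: "fv (trf fr d \<sigma> \<phi>) \<subseteq> (\<Union>v\<in>fv \<phi>. fvt (\<sigma> v))"
proof (induction \<phi> arbitrary: d \<sigma>)
  case (Ex v \<phi>)
  show ?case
  proof
    fix x assume "x \<in> fv (trf fr d \<sigma> (Ex v \<phi>))"
    then have x: "x \<in> fv (trf fr (Suc d) (\<sigma>(v := Var (fr d))) \<phi>)" "x \<noteq> fr d" by auto
    then obtain w where "w \<in> fv \<phi>" "x \<in> fvt ((\<sigma>(v := Var (fr d))) w)" using Ex.IH by blast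
    then show "x \<in> (\<Union>v\<in>fv (Ex v \<phi>). fvt (\<sigma> v))" using x(2) by (cases "w = v") auto
  qed
next
  case (Conj \<phi>1 \<phi>2) show ?case using Conj.IH(1)[of d \<sigma>] Conj.IH(2)[of d \<sigma>] by fastforce
qed (auto simp: fvt_trt)

lemma params_trf: "params (trf fr d \<sigma> \<phi>) \<subseteq> params \<phi> \<union> (\<Union>v\<in>fv \<phi>. parst (\<sigma> v))"
proof (induction \<phi> arbitrary: d \<sigma>)
  case (Ex v \<phi>)
  show ?case
  proof
    fix x assume "x \<in> params (trf fr d \<sigma> (Ex v \<phi>))"
    then have x: "x \<in> params (trf fr (Suc d) (\<sigma>(v := Var (fr d))) \<phi>)" by auto
    then have "x \<in> params \<phi> \<or> (\<exists>w\<in>fv \<phi>. x \<in> parst ((\<sigma>(v := Var (fr d))) w))" using Ex.IH by blast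
    then show "x \<in> params (Ex v \<phi>) \<union> (\<Union>v\<in>fv (Ex v \<phi>). parst (\<sigma> v))"
      by (auto split: if_splits)
  qed
next
  case (Conj \<phi>1 \<phi>2) show ?case using Conj.IH(1)[of d \<sigma>] Conj.IH(2)[of d \<sigma>] by fastforce
qed (auto simp: parst_trt)

lemma wff_trf: "(\<forall>v. wft S (\<sigma> v)) \<Longrightarrow> wff S \<phi> \<Longrightarrow> wff S (trf fr d \<sigma> \<phi>)"
  by (induction \<phi> arbitrary: d \<sigma>) (auto intro: wft_trt)

lemma finite_fvt: "finite (fvt t)"
  by (induction t) auto

lemma finite_fv: "finite (fv \<phi>)"
  by (induction \<phi>) (auto simp: finite_fvt)

fun mpt :: "('a \<Rightarrow> 'a) \<Rightarrow> ('f, 'v, 'a) trm \<Rightarrow> ('f, 'v, 'a) trm" where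
  "mpt \<tau> (Var v) = Var v"
| "mpt \<tau> (Par a) = Par (\<tau> a)"
| "mpt \<tau> (Fn f ts) = Fn f (map (mpt \<tau>) ts)"

fun mpf :: "('a \<Rightarrow> 'a) \<Rightarrow> ('f, 'r, 'v, 'a) fm \<Rightarrow> ('f, 'r, 'v, 'a) fm" where
  "mpf \<tau> (Eq s t) = Eq (mpt \<tau> s) (mpt \<tau> t)"
| "mpf \<tau> (Rel r ts) = Rel r (map (mpt \<tau>) ts)"
| "mpf \<tau> (Neg \<phi>) = Neg (mpf \<tau> \<phi>)"
| "mpf \<tau> (Conj \<phi> \<psi>) = Conj (mpf \<tau> \<phi>) (mpf \<tau> \<psi>)"
| "mpf \<tau> (Ex v \<phi>) = Ex v (mpf \<tau> \<phi>)"

lemma fvt_mpt: "fvt (mpt \<tau> t) = fvt t" by (induction t) auto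
lemma fv_mpf: "fv (mpf \<tau> \<phi>) = fv \<phi>" by (induction \<phi>) (auto simp: fvt_mpt)
lemma parst_mpt: "parst (mpt \<tau> t) = \<tau> ` parst t" by (induction t) auto
lemma params_mpf: "params (mpf \<tau> \<phi>) = \<tau> ` params \<phi>" by (induction \<phi>) (auto simp: parst_mpt image_Un)
lemma wft_mpt: "wft S (mpt \<tau> t) = wft S t" by (induction t) auto
lemma wff_mpf: "wff S (mpf \<tau> \<phi>) = wff S \<phi>" by (induction \<phi>) (auto simp: wft_mpt)
lemma mpt_inv: "(\<forall>x\<in>parst t. \<tau> (\<tau>' x) = x) \<Longrightarrow> mpt \<tau> (mpt \<tau>' t) = t"
  by (induction t) (auto intro: map_idI)
lemma mpf_inv: "(\<forall>x\<in>params \<phi>. \<tau> (\<tau>' x) = x) \<Longrightarrow> mpf \<tau> (mpf \<tau>' \<phi>) = \<phi>"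
  by (induction \<phi>) (auto simp: mpt_inv intro: map_idI)

definition fclosed :: "('a, 'f, 'r) struc \<Rightarrow> 'a set \<Rightarrow> bool" where
  "fclosed C U \<longleftrightarrow> (\<forall>f xs. set xs \<subseteq> U \<longrightarrow> length xs = farity C f \<longrightarrow> fint C f xs \<in> U)"

lemma aut_fint: "aut C \<tau> \<Longrightarrow> set xs \<subseteq> univ C \<Longrightarrow> length xs = farity C f \<Longrightarrow>
    \<tau> (fint C f xs) = fint C f (map \<tau> xs)"
  unfolding aut_def by blast

lemma aut_rint: "aut C \<tau> \<Longrightarrow> set xs \<subseteq> univ C \<Longrightarrow> length xs = rarity C r \<Longrightarrow>
    rint C r (map \<tau> xs) = rint C r xs"
  unfolding aut_def by blast

lemma evt_univ: "evt (S\<lparr>univ := U\<rparr>) e t = evt S e t"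
  by (induction t) (auto intro!: arg_cong[where f="fint S _"])

lemma evt_univ': "evt (S\<lparr>univ := U\<rparr>) = evt S"
  by (intro ext) (rule evt_univ)

lemma univ_upd: "univ (S\<lparr>univ := U\<rparr>) = U" by simp

lemma evt_in: "fclosed C U \<Longrightarrow> range e \<subseteq> U \<Longrightarrow> parst t \<subseteq> U \<Longrightarrow> wft C t \<Longrightarrow> evt C e t \<in> U"
proof (induction t)
  case (Fn f ts)
  then have "set (map (evt C e) ts) \<subseteq> U" by auto
  then show ?case using Fn.prems unfolding fclosed_def by simp
qed auto

lemma evt_mpt:
  assumes "aut C \<tau>" "U \<subseteq> univ C" "fclosed C U" "range e \<subseteq> U"
  shows "parst t \<subseteq> U \<Longrightarrow> wft C t \<Longrightarrow> evt C (\<tau> \<circ> e) (mpt \<tau> t) = \<tau> (evt C e t)"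
proof (induction t)
  case (Fn f ts)
  have "\<forall>x\<in>set ts. evt C (\<tau> \<circ> e) (mpt \<tau> x) = \<tau> (evt C e x)"
  proof
    fix x assume x: "x \<in> set ts"
    then have "parst x \<subseteq> U" "wft C x" using Fn.prems by auto
    then show "evt C (\<tau> \<circ> e) (mpt \<tau> x) = \<tau> (evt C e x)" using Fn.IH x by blast
  qed
  then have "map (evt C (\<tau> \<circ> e) \<circ> mpt \<tau>) ts = map \<tau> (map (evt C e) ts)" by auto
  moreover have "set (map (evt C e) ts) \<subseteq> univ C"
    using Fn.prems evt_in[OF assms(3,4)] assms(2) by (auto simp: UN_subset_iff)
  moreover have "length (map (evt C e) ts) = farity C f" using Fn.prems by simp
  ultimately show ?case unfolding mpt.simps evt.simps
    by (metis aut_fint[OF assms(1)] map_map)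
qed auto

lemma sat_mpf:
  assumes "aut C \<tau>" "U \<subseteq> univ C" "fclosed C U"
  shows "range e \<subseteq> U \<Longrightarrow> params \<phi> \<subseteq> U \<Longrightarrow> wff C \<phi> \<Longrightarrow>
    sat (C\<lparr>univ := \<tau> ` U\<rparr>) (\<tau> \<circ> e) (mpf \<tau> \<phi>) = sat (C\<lparr>univ := U\<rparr>) e \<phi>"
proof (induction \<phi> arbitrary: e)
  case (Eq s t)
  have inj: "inj_on \<tau> (univ C)" using assms(1) unfolding aut_def bij_betw_def by auto
  have "evt C e s \<in> univ C" "evt C e t \<in> univ C" using Eq evt_in[OF assms(3)] assms(2) by auto
  moreover have "evt C (\<tau> \<circ> e) (mpt \<tau> s) = \<tau> (evt C e s)" "evt C (\<tau> \<circ> e) (mpt \<tau> t) = \<tau> (evt C e t)"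
    using Eq evt_mpt[OF assms(1-3) Eq.prems(1)] by auto
  ultimately show ?case unfolding sat.simps mpf.simps evt_univ using inj
    by (auto dest: inj_onD)
next
  case (Rel r ts)
  have "map (evt C (\<tau> \<circ> e) \<circ> mpt \<tau>) ts = map \<tau> (map (evt C e) ts)"
    using Rel evt_mpt[OF assms(1-3) Rel.prems(1)] by (auto simp: UN_subset_iff)
  moreover have "set (map (evt C e) ts) \<subseteq> univ C"
    using Rel.prems evt_in[OF assms(3) Rel.prems(1)] assms(2) by (auto simp: UN_subset_iff)
  moreover have "length (map (evt C e) ts) = rarity C r" using Rel.prems by simp
  ultimately have "rint C r (map (evt C (\<tau> \<circ> e) \<circ> mpt \<tau>) ts) = rint C r (map (evt C e) ts)"
    by (metis aut_rint[OF assms(1)] map_map)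
  then show ?case unfolding mpf.simps sat.simps evt_univ' map_map by simp
next
  case (Neg \<phi>) then show ?case by simp
next
  case (Conj \<phi>1 \<phi>2) then show ?case by simp
next
  case (Ex v \<phi>)
  have eq: "(\<tau> \<circ> e)(v := \<tau> b) = \<tau> \<circ> (e(v := b))" for b by auto
  have "sat (C\<lparr>univ := \<tau> ` U\<rparr>) (\<tau> \<circ> (e(v := b))) (mpf \<tau> \<phi>) = sat (C\<lparr>univ := U\<rparr>) (e(v := b)) \<phi>"
    if "b \<in> U" for b
    by (rule Ex.IH) (use Ex.prems that in auto)
  note * = this
  have "sat (C\<lparr>univ := \<tau> ` U\<rparr>) (\<tau> \<circ> e) (mpf \<tau> (Ex v \<phi>)) =
     (\<exists>b\<in>\<tau> ` U. sat (C\<lparr>univ := \<tau> ` U\<rparr>) ((\<tau> \<circ> e)(v := b)) (mpf \<tau> \<phi>))"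
    unfolding mpf.simps sat.simps univ_upd ..
  also have "\<dots> = (\<exists>b\<in>U. sat (C\<lparr>univ := \<tau> ` U\<rparr>) ((\<tau> \<circ> e)(v := \<tau> b)) (mpf \<tau> \<phi>))"
    by blast
  also have "\<dots> = (\<exists>b\<in>U. sat (C\<lparr>univ := \<tau> ` U\<rparr>) (\<tau> \<circ> (e(v := b))) (mpf \<tau> \<phi>))"
    unfolding eq ..
  also have "\<dots> = (\<exists>b\<in>U. sat (C\<lparr>univ := U\<rparr>) (e(v := b)) \<phi>)"
    by (rule bex_cong[OF refl]) (rule *)
  also have "\<dots> = sat (C\<lparr>univ := U\<rparr>) e (Ex v \<phi>)"
    unfolding sat.simps univ_upd ..
  finally show ?case .
qed

lemma struct_fclosed: "struct_ok C \<Longrightarrow> fclosed C (univ C)"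
  unfolding struct_ok_def fclosed_def by auto

lemma aut_image: "aut C \<tau> \<Longrightarrow> \<tau> ` univ C = univ C"
  unfolding aut_def bij_betw_def by auto

lemma aut_in: "aut C \<tau> \<Longrightarrow> x \<in> univ C \<Longrightarrow> \<tau> x \<in> univ C"
  unfolding aut_def bij_betw_def by auto

lemma sat_aut:
  assumes "struct_ok C" "aut C \<tau>" "range e \<subseteq> univ C" "params \<phi> \<subseteq> univ C" "wff C \<phi>"
  shows "sat C (\<tau> \<circ> e) (mpf \<tau> \<phi>) = sat C e \<phi>"
  using sat_mpf[OF assms(2) order_refl struct_fclosed[OF assms(1)] assms(3-5)]
  by (simp add: aut_image[OF assms(2)])

lemma aut_inv:
  assumes "struct_ok C" "aut C \<tau>"
  shows "aut C (inv_into (univ C) \<tau>)"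
proof -
  let ?t = "inv_into (univ C) \<tau>"
  have bij: "bij_betw \<tau> (univ C) (univ C)" using assms(2) unfolding aut_def by auto
  have bij': "bij_betw ?t (univ C) (univ C)" by (rule bij_betw_inv_into[OF bij])
  have tin: "\<And>x. x \<in> univ C \<Longrightarrow> ?t x \<in> univ C" using bij' bij_betwE by blast
  have ft: "\<And>x. x \<in> univ C \<Longrightarrow> \<tau> (?t x) = x" using bij by (simp add: bij_betw_imp_surj_on f_inv_into_f)
  have tf: "\<And>x. x \<in> univ C \<Longrightarrow> ?t (\<tau> x) = x" using bij by (simp add: bij_betw_imp_inj_on inv_into_f_f)
  have mm: "set xs \<subseteq> univ C \<Longrightarrow> map \<tau> (map ?t xs) = xs" for xs
    by (induction xs) (auto simp: ft)
  have ms: "set xs \<subseteq> univ C \<Longrightarrow> set (map ?t xs) \<subseteq> univ C" for xs using tin by auto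
  show ?thesis unfolding aut_def
  proof (intro conjI allI impI)
    show "bij_betw ?t (univ C) (univ C)" by fact
  next
    fix f xs assume xs: "set xs \<subseteq> univ C" "length xs = farity C f"
    have "fint C f (map ?t xs) \<in> univ C" using assms(1) ms[OF xs(1)] xs(2)
      unfolding struct_ok_def by auto
    moreover have "\<tau> (fint C f (map ?t xs)) = fint C f xs"
      using assms(2) ms[OF xs(1)] xs(2) mm[OF xs(1)] unfolding aut_def by (metis length_map)
    ultimately show "?t (fint C f xs) = fint C f (map ?t xs)" by (metis tf)
  next
    fix r xs assume xs: "set xs \<subseteq> univ C" "length xs = rarity C r"
    show "rint C r (map ?t xs) = rint C r xs"
      using assms(2) ms[OF xs(1)] xs(2) mm[OF xs(1)] unfolding aut_def by (metis length_map)
  qed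
qed

lemma aut_comp:
  assumes "struct_ok C" "aut C \<sigma>" "aut C \<tau>"
  shows "aut C (\<sigma> \<circ> \<tau>)"
  unfolding aut_def
proof (intro conjI allI impI)
  show "bij_betw (\<sigma> \<circ> \<tau>) (univ C) (univ C)"
    using assms unfolding aut_def by (auto intro: bij_betw_trans)
next
  fix f xs assume xs: "set xs \<subseteq> univ C" "length xs = farity C f"
  have "set (map \<tau> xs) \<subseteq> univ C" using xs aut_in[OF assms(3)] by auto
  then show "(\<sigma> \<circ> \<tau>) (fint C f xs) = fint C f (map (\<sigma> \<circ> \<tau>) xs)"
    using assms(2,3) xs unfolding aut_def by simp
next
  fix r xs assume xs: "set xs \<subseteq> univ C" "length xs = rarity C r"
  have "set (map \<tau> xs) \<subseteq> univ C" using xs aut_in[OF assms(3)] by auto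
  have "rint C r (map (\<sigma> \<circ> \<tau>) xs) = rint C r (map \<sigma> (map \<tau> xs))" by simp
  also have "\<dots> = rint C r (map \<tau> xs)" using assms(2) \<open>set (map \<tau> xs) \<subseteq> univ C\<close> xs(2)
    unfolding aut_def by (metis length_map)
  also have "\<dots> = rint C r xs" using assms(3) xs unfolding aut_def by blast
  finally show "rint C r (map (\<sigma> \<circ> \<tau>) xs) = rint C r xs" .
qed

lemma tup_asg_Inl[simp]: "tup_asg C b (Inl i) = b i"
  by (simp add: tup_asg_def)

lemma tup_asg_range:
  assumes "struct_ok C" "range b \<subseteq> univ C"
  shows "range (tup_asg C b) \<subseteq> univ C"
proof -
  have "(SOME x. x \<in> univ C) \<in> univ C" using assms(1) unfolding struct_ok_def
    by (meson ex_in_conv someI_ex)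
  then show ?thesis using range_subsetD[OF assms(2)] unfolding tup_asg_def by (auto split: sum.splits)
qed

lemma aut_inv_f: "aut C \<tau> \<Longrightarrow> x \<in> univ C \<Longrightarrow> inv_into (univ C) \<tau> (\<tau> x) = x"
  unfolding aut_def by (meson bij_betw_inv_into_left)

lemma aut_f_inv: "aut C \<tau> \<Longrightarrow> x \<in> univ C \<Longrightarrow> \<tau> (inv_into (univ C) \<tau> x) = x"
  unfolding aut_def by (meson bij_betw_inv_into_right)

lemma aut_inv_img: "aut C \<tau> \<Longrightarrow> N \<subseteq> univ C \<Longrightarrow> y \<in> \<tau> ` N \<Longrightarrow> inv_into (univ C) \<tau> y \<in> N"
  using aut_inv_f by fastforce

lemma tp_eq_sym: "tp_eq C A a b \<Longrightarrow> tp_eq C A b a"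
  unfolding tp_eq_def by blast

lemma tp_eq_transport:
  fixes C :: "('a, 'f, 'r) struc" and a b :: "'i \<Rightarrow> 'a"
  assumes ok: "struct_ok C" and au: "aut C \<tau>" and N: "N \<subseteq> univ C"
    and ra: "range a \<subseteq> univ C" and rb: "range b \<subseteq> univ C" and tp: "tp_eq C N a b"
  shows "tp_eq C (\<tau> ` N) (\<tau> \<circ> a) (\<tau> \<circ> b)"
  unfolding tp_eq_def
proof (intro allI impI)
  let ?t = "inv_into (univ C) \<tau>"
  fix \<phi> :: "('f, 'r, 'i + nat, 'a) fm"
  assume lf: "lform C (\<tau> ` N) \<phi>"
  have tN: "\<tau> ` N \<subseteq> univ C" using N aut_in[OF au] by auto
  have key: "sat C (tup_asg C (\<tau> \<circ> c)) \<phi> = sat C (tup_asg C c) (mpf ?t \<phi>)"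
    if rc: "range c \<subseteq> univ C" for c :: "'i \<Rightarrow> 'a"
  proof -
    have r1: "range (tup_asg C (\<tau> \<circ> c)) \<subseteq> univ C"
      by (rule tup_asg_range[OF ok]) (use rc aut_in[OF au] in auto)
    have "sat C (?t \<circ> tup_asg C (\<tau> \<circ> c)) (mpf ?t \<phi>) = sat C (tup_asg C (\<tau> \<circ> c)) \<phi>"
      by (rule sat_aut[OF ok aut_inv[OF ok au] r1]) (use lf tN in \<open>auto simp: lform_def\<close>)
    moreover have "sat C (?t \<circ> tup_asg C (\<tau> \<circ> c)) (mpf ?t \<phi>) = sat C (tup_asg C c) (mpf ?t \<phi>)"
    proof (rule sat_cong, rule ballI)
      fix v assume "v \<in> fv (mpf ?t \<phi>)"
      then obtain i where "v = Inl i" using lf unfolding lform_def fv_mpf by auto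
      then show "(?t \<circ> tup_asg C (\<tau> \<circ> c)) v = tup_asg C c v"
        using aut_inv_f[OF au] rc by auto
    qed
    ultimately show ?thesis by simp
  qed
  have "lform C N (mpf ?t \<phi>)"
    using lf N aut_inv_img[OF au N] unfolding lform_def
    by (auto simp: fv_mpf params_mpf wff_mpf)
  then have "sat C (tup_asg C a) (mpf ?t \<phi>) = sat C (tup_asg C b) (mpf ?t \<phi>)"
    using tp unfolding tp_eq_def by blast
  then show "sat C (tup_asg C (\<tau> \<circ> a)) \<phi> = sat C (tup_asg C (\<tau> \<circ> b)) \<phi>"
    using key[OF ra] key[OF rb] by simp
qed

lemma elem_sub_transport:
  fixes C :: "('a, 'f, 'r) struc"
  assumes ok: "struct_ok C" and au: "aut C \<tau>" and es: "elem_sub C N"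
  shows "elem_sub C (\<tau> ` N)"
proof -
  let ?t = "inv_into (univ C) \<tau>"
  have N: "N \<subseteq> univ C" "N \<noteq> {}" and fc: "fclosed C N"
    using es unfolding elem_sub_def fclosed_def by auto
  have tN: "\<tau> ` N \<subseteq> univ C" using N aut_in[OF au] by auto
  have cl: "fint C f xs \<in> \<tau> ` N" if xs: "set xs \<subseteq> \<tau> ` N" "length xs = farity C f" for f xs
  proof -
    let ?ys = "map ?t xs"
    have ys: "set ?ys \<subseteq> N" using xs aut_inv_img[OF au N(1)] by auto
    have "map \<tau> ?ys = xs" unfolding map_map
      by (rule map_idI) (use xs(1) tN aut_f_inv[OF au] in auto)
    then have "fint C f xs = \<tau> (fint C f ?ys)"
      using aut_fint[OF au, of ?ys f] ys N xs(2) by auto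
    moreover have "fint C f ?ys \<in> N" using fc ys xs(2) unfolding fclosed_def by auto
    ultimately show ?thesis by auto
  qed
  have el: "sat (C\<lparr>univ := \<tau> ` N\<rparr>) e \<phi> = sat C e \<phi>"
    if w: "wff C \<phi>" and p: "params \<phi> \<subseteq> \<tau> ` N" and r: "range e \<subseteq> \<tau> ` N"
    for \<phi> :: "('f, 'r, nat, 'a) fm" and e
  proof -
    define e0 where "e0 = ?t \<circ> e"
    define \<phi>0 where "\<phi>0 = mpf ?t \<phi>"
    have te: "\<tau> \<circ> e0 = e" unfolding e0_def
    proof (rule ext)
      fix x have "e x \<in> univ C" using r tN by blast
      then show "(\<tau> \<circ> (?t \<circ> e)) x = e x" by (simp add: aut_f_inv[OF au])
    qed
    have tp: "mpf \<tau> \<phi>0 = \<phi>" unfolding \<phi>0_def using p tN aut_f_inv[OF au] by (intro mpf_inv) auto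
    have re: "range e0 \<subseteq> N" unfolding e0_def using r aut_inv_img[OF au N(1)] by auto
    have pp: "params \<phi>0 \<subseteq> N" unfolding \<phi>0_def params_mpf using p aut_inv_img[OF au N(1)] by auto
    have w0: "wff C \<phi>0" unfolding \<phi>0_def wff_mpf by fact
    have "sat (C\<lparr>univ := \<tau> ` N\<rparr>) e \<phi> = sat (C\<lparr>univ := N\<rparr>) e0 \<phi>0"
      using sat_mpf[OF au N(1) fc re pp w0] te tp by simp
    also have "\<dots> = sat C e0 \<phi>0" using es w0 pp re unfolding elem_sub_def by blast
    also have "\<dots> = sat C (\<tau> \<circ> e0) (mpf \<tau> \<phi>0)"
      using sat_aut[OF ok au, of e0 \<phi>0] re pp w0 N by auto
    finally show ?thesis using te tp by simp
  qed
  show ?thesis unfolding elem_sub_def using tN N(2) cl el by blast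
qed

lemma small_image: "small \<kappa> N \<Longrightarrow> small \<kappa> (f ` N)"
  unfolding small_def using card_of_image ordLeq_ordLess_trans by blast

lemma small_subset: "small \<kappa> N \<Longrightarrow> M \<subseteq> N \<Longrightarrow> small \<kappa> M"
  unfolding small_def using card_of_mono1 ordLeq_ordLess_trans by blast

lemma small_range: "small \<kappa> (UNIV :: 'i set) \<Longrightarrow> small \<kappa> (range (f :: 'i \<Rightarrow> 'b))"
  by (rule small_image)

lemma small_Un:
  assumes "Card_order \<kappa>" "small \<kappa> (UNIV :: nat set)" "small \<kappa> A" "small \<kappa> B"
  shows "small \<kappa> (A \<union> B)"
proof -
  have "(card_of (UNIV :: nat set), card_of (Field \<kappa>)) \<in> ordLess"
    using assms(2) card_of_Field_ordIso[OF assms(1)] ordIso_symmetric ordLess_ordIso_trans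
    unfolding small_def by blast
  then have "infinite (Field \<kappa>)"
    using card_of_ordLeq_finite ordLess_imp_ordLeq infinite_UNIV_nat by blast
  then show ?thesis using card_of_Un_ordLess_infinite_Field assms unfolding small_def by blast
qed

lemma homog:
  fixes C :: "('a, 'f, 'r) struc" and \<kappa> :: "'k rel" and a b :: "'i \<Rightarrow> 'a"
  assumes mon: "monster C \<kappa>" and si: "small \<kappa> (UNIV :: 'i set)"
    and A: "A \<subseteq> univ C" "small \<kappa> A"
    and ra: "range a \<subseteq> univ C" and rb: "range b \<subseteq> univ C"
    and tp: "tp_eq C A a b"
  shows "\<exists>\<tau>. aut C \<tau> \<and> (\<forall>x\<in>A. \<tau> x = x) \<and> \<tau> \<circ> a = b"
proof -
  have ok: "struct_ok C" and co: "Card_order \<kappa>" and sn: "small \<kappa> (UNIV :: nat set)"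
    and sh: "strongly_homogeneous \<kappa> C"
    using mon unfolding monster_def by auto
  have tpE: "sat C (tup_asg C a) \<phi> = sat C (tup_asg C b) \<phi>"
    if "lform C A \<phi>" for \<phi> :: "('f, 'r, 'i + nat, 'a) fm"
    using tp that unfolding tp_eq_def by blast
  have i1: "b i = a i" if "a i \<in> A" for i
  proof -
    have "lform C A (Eq (Var (Inl i)) (Par (a i)) :: ('f, 'r, 'i + nat, 'a) fm)"
      using that unfolding lform_def by auto
    from tpE[OF this] show ?thesis by simp
  qed
  have i2: "b i = b j" if "a i = a j" for i j
  proof -
    have "lform C A (Eq (Var (Inl i)) (Var (Inl j)) :: ('f, 'r, 'i + nat, 'a) fm)"
      unfolding lform_def by auto
    from tpE[OF this] that show ?thesis by simp
  qed
  define f where "f x = (if x \<in> A then x else b (SOME i. a i = x))" for x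
  have fa: "f (a i) = b i" for i
  proof (cases "a i \<in> A")
    case True then show ?thesis using i1 unfolding f_def by simp
  next
    case False
    have "a (SOME j. a j = a i) = a i" by (rule someI) (rule refl)
    then have "b (SOME j. a j = a i) = b i" by (rule i2)
    then show ?thesis using False unfolding f_def by simp
  qed
  define D where "D = A \<union> range a"
  have D: "D \<subseteq> univ C" using A ra unfolding D_def by auto
  have sD: "small \<kappa> D" unfolding D_def by (rule small_Un[OF co sn A(2) small_range[OF si]])
  have fD: "f ` D \<subseteq> univ C"
  proof
    fix y assume "y \<in> f ` D"
    then obtain x where x: "x \<in> D" "y = f x" by blast
    show "y \<in> univ C"
    proof (cases "x \<in> A")
      case True then show ?thesis using x A(1) unfolding f_def by auto
    next
      case False
      then obtain i where "x = a i" using x unfolding D_def by auto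
      then show ?thesis using x fa range_subsetD[OF rb] by simp
    qed
  qed
  have pe: "partial_elem C D f"
    unfolding partial_elem_def
  proof (intro allI impI)
    fix \<phi> :: "('f, 'r, nat, 'a) fm" and e :: "nat \<Rightarrow> 'a"
    assume w: "wff C \<phi>" and p: "params \<phi> = {}" and r: "range e \<subseteq> D"
    define s :: "nat \<Rightarrow> ('f, 'i + nat, 'a) trm" where
      "s n = (if e n \<in> A then Par (e n) else Var (Inl (SOME i. a i = e n)))" for n
    define \<psi> where "\<psi> = (trf Inr 0 s \<phi> :: ('f, 'r, 'i + nat, 'a) fm)"
    have lf: "lform C A \<psi>"
      unfolding lform_def
    proof (intro conjI)
      show "wff C \<psi>" unfolding \<psi>_def by (rule wff_trf) (auto simp: s_def w)
      show "fv \<psi> \<subseteq> range Inl" unfolding \<psi>_def using fv_trf[of Inr 0 s \<phi>] by (auto simp: s_def split: if_splits)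
      show "params \<psi> \<subseteq> A" unfolding \<psi>_def using params_trf[of Inr 0 s \<phi>] p by (auto simp: s_def split: if_splits)
    qed
    have ex: "a (SOME i. a i = e n) = e n" if "e n \<notin> A" for n
    proof -
      have "e n \<in> range a" using r that unfolding D_def by auto
      then obtain i where "a i = e n" by auto
      then show ?thesis by (rule someI[where P="\<lambda>j. a j = e n"])
    qed
    have "sat C (tup_asg C a) \<psi> = sat C e \<phi>"
      unfolding \<psi>_def by (rule sat_trf) (auto simp: s_def ex)
    moreover have "sat C (tup_asg C b) \<psi> = sat C (f \<circ> e) \<phi>"
      unfolding \<psi>_def by (rule sat_trf) (auto simp: s_def f_def)
    ultimately show "sat C e \<phi> = sat C (f \<circ> e) \<phi>" using tpE[OF lf] by simp
  qed
  obtain \<tau> where \<tau>: "aut C \<tau>" "\<forall>x\<in>D. \<tau> x = f x"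
    using sh[unfolded strongly_homogeneous_def, rule_format, OF D sD fD pe] by blast
  have "\<forall>x\<in>A. \<tau> x = x" using \<tau>(2) unfolding D_def f_def by auto
  moreover have "\<tau> \<circ> a = b" using \<tau>(2) fa unfolding D_def by (auto intro!: ext)
  ultimately show ?thesis using \<tau>(1) by blast
qed

definition finsat :: "('a, 'f, 'r) struc \<Rightarrow> ('f, 'r, 'v, 'a) fm set \<Rightarrow> bool" where
  "finsat C \<Psi> \<longleftrightarrow> (\<forall>F. finite F \<longrightarrow> F \<subseteq> \<Psi> \<longrightarrow> (\<exists>e. range e \<subseteq> univ C \<and> (\<forall>\<phi>\<in>F. sat C e \<phi>)))"

lemma max_finsat:
  fixes L :: "('f, 'r, 'v, 'a) fm \<Rightarrow> bool"
  assumes fs: "finsat C \<Phi>" and L: "\<forall>\<phi>\<in>\<Phi>. L \<phi>" and Ln: "\<And>\<phi>. L \<phi> \<Longrightarrow> L (Neg \<phi>)"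
  shows "\<exists>\<Psi>. \<Phi> \<subseteq> \<Psi> \<and> (\<forall>\<phi>\<in>\<Psi>. L \<phi>) \<and> finsat C \<Psi> \<and> (\<forall>\<phi>. L \<phi> \<longrightarrow> \<phi> \<in> \<Psi> \<or> Neg \<phi> \<in> \<Psi>)"
proof -
  define Z where "Z = {\<Psi>. \<Phi> \<subseteq> \<Psi> \<and> (\<forall>\<phi>\<in>\<Psi>. L \<phi>) \<and> finsat C \<Psi>}"
  have "\<Phi> \<in> Z" using fs L unfolding Z_def by auto
  then have ne: "Z \<noteq> {}" by auto
  have ch: "\<Union>ch \<in> Z" if chne: "ch \<noteq> {}" and chs: "subset.chain Z ch" for ch
  proof -
    have sub: "ch \<subseteq> Z" using chs unfolding subset_chain_def by auto
    have "finsat C (\<Union>ch)" unfolding finsat_def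
    proof (intro allI impI)
      fix F assume F: "finite F" "F \<subseteq> \<Union>ch"
      obtain B where "B \<in> ch" "F \<subseteq> B" using finite_subset_Union_chain[OF F chne chs] by blast
      then have "finsat C B" using sub unfolding Z_def by blast
      then show "\<exists>e. range e \<subseteq> univ C \<and> (\<forall>\<phi>\<in>F. sat C e \<phi>)"
        using F(1) \<open>F \<subseteq> B\<close> unfolding finsat_def by blast
    qed
    then show ?thesis using sub chne unfolding Z_def by blast
  qed
  obtain \<Psi> where \<Psi>: "\<Psi> \<in> Z" and mx: "\<forall>X\<in>Z. \<Psi> \<subseteq> X \<longrightarrow> X = \<Psi>"
    using subset_Zorn_nonempty[OF ne ch] by blast
  have "\<phi> \<in> \<Psi> \<or> Neg \<phi> \<in> \<Psi>" if Lp: "L \<phi>" for \<phi>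
  proof (rule ccontr)
    assume nn: "\<not> (\<phi> \<in> \<Psi> \<or> Neg \<phi> \<in> \<Psi>)"
    have nf: "\<not> finsat C (insert \<psi> \<Psi>)" if "\<psi> \<notin> \<Psi>" "L \<psi>" for \<psi>
    proof
      assume "finsat C (insert \<psi> \<Psi>)"
      then have "insert \<psi> \<Psi> \<in> Z" using \<Psi> that unfolding Z_def by auto
      then show False using mx that by auto
    qed
    have "\<not> finsat C (insert \<phi> \<Psi>)" using nf[of \<phi>] nn Lp by blast
    then obtain F1 where F1: "finite F1" "F1 \<subseteq> insert \<phi> \<Psi>" "\<not> (\<exists>e. range e \<subseteq> univ C \<and> (\<forall>\<phi>\<in>F1. sat C e \<phi>))"
      unfolding finsat_def by blast
    have "\<not> finsat C (insert (Neg \<phi>) \<Psi>)" using nf[of "Neg \<phi>"] nn Ln[OF Lp] by blast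
    then obtain F2 where F2: "finite F2" "F2 \<subseteq> insert (Neg \<phi>) \<Psi>" "\<not> (\<exists>e. range e \<subseteq> univ C \<and> (\<forall>\<phi>\<in>F2. sat C e \<phi>))"
      unfolding finsat_def by blast
    have fin: "finite ((F1 - {\<phi>}) \<union> (F2 - {Neg \<phi>}))" using F1(1) F2(1) by blast
    have sub: "(F1 - {\<phi>}) \<union> (F2 - {Neg \<phi>}) \<subseteq> \<Psi>" using F1(2) F2(2) by blast
    have fsP: "finsat C \<Psi>" using \<Psi> unfolding Z_def by simp
    obtain e where e: "range e \<subseteq> univ C" "\<forall>\<psi>\<in>(F1 - {\<phi>}) \<union> (F2 - {Neg \<phi>}). sat C e \<psi>"
      using fsP[unfolded finsat_def, rule_format, OF fin sub] by (elim exE conjE)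
    show False
    proof (cases "sat C e \<phi>")
      case True
      then have "\<forall>\<psi>\<in>F1. sat C e \<psi>" using e(2) by auto
      then show False using F1(3) e(1) by blast
    next
      case False
      then have "\<forall>\<psi>\<in>F2. sat C e \<psi>" using e(2) by auto
      then show False using F2(3) e(1) by blast
    qed
  qed
  then show ?thesis using \<Psi> unfolding Z_def by blast
qed

lemma sat_conj: "sat S e (foldr Conj fl T) = (sat S e T \<and> (\<forall>\<phi>\<in>set fl. sat S e \<phi>))"
  by (induction fl) auto

lemma fv_conj: "fv (foldr Conj fl T) = fv T \<union> (\<Union>\<phi>\<in>set fl. fv \<phi>)"
  by (induction fl) auto

lemma params_conj: "params (foldr Conj fl T) = params T \<union> (\<Union>\<phi>\<in>set fl. params \<phi>)"
  by (induction fl) auto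

lemma wff_conj: "wff S (foldr Conj fl T) = (wff S T \<and> (\<forall>\<phi>\<in>set fl. wff S \<phi>))"
  by (induction fl) auto

lemma fv_exs: "fv (foldr Ex vs \<phi>) = fv \<phi> - set vs"
  by (induction vs) auto

lemma params_exs: "params (foldr Ex vs \<phi>) = params \<phi>"
  by (induction vs) auto

lemma wff_exs: "wff S (foldr Ex vs \<phi>) = wff S \<phi>"
  by (induction vs) auto

lemma sat_exs: "sat S e (foldr Ex vs \<phi>) =
  (\<exists>e'. (\<forall>w. w \<notin> set vs \<longrightarrow> e' w = e w) \<and> (\<forall>w\<in>set vs. e' w \<in> univ S) \<and> sat S e' \<phi>)"
proof (induction vs arbitrary: e)
  case Nil
  show ?case
  proof
    assume "sat S e (foldr Ex [] \<phi>)" then show "\<exists>e'. (\<forall>w. w \<notin> set [] \<longrightarrow> e' w = e w) \<and> (\<forall>w\<in>set []. e' w \<in> univ S) \<and> sat S e' \<phi>"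
      by auto
  next
    assume "\<exists>e'. (\<forall>w. w \<notin> set [] \<longrightarrow> e' w = e w) \<and> (\<forall>w\<in>set []. e' w \<in> univ S) \<and> sat S e' \<phi>"
    then obtain e' where "\<forall>w. e' w = e w" "sat S e' \<phi>" by auto
    then have "e' = e" by auto
    then show "sat S e (foldr Ex [] \<phi>)" using \<open>sat S e' \<phi>\<close> by simp
  qed
next
  case (Cons v vs)
  show ?case
  proof
    assume "sat S e (foldr Ex (v # vs) \<phi>)"
    then obtain b where b: "b \<in> univ S" "sat S (e(v := b)) (foldr Ex vs \<phi>)" by auto
    then obtain e' where e': "\<forall>w. w \<notin> set vs \<longrightarrow> e' w = (e(v := b)) w" "\<forall>w\<in>set vs. e' w \<in> univ S" "sat S e' \<phi>"
      using Cons.IH by blast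
    have "\<forall>w. w \<notin> set (v # vs) \<longrightarrow> e' w = e w" using e'(1) by auto
    moreover have "\<forall>w\<in>set (v # vs). e' w \<in> univ S"
    proof
      fix w assume "w \<in> set (v # vs)"
      then show "e' w \<in> univ S" using e'(1,2) b(1) by (cases "w \<in> set vs") auto
    qed
    ultimately show "\<exists>e'. (\<forall>w. w \<notin> set (v # vs) \<longrightarrow> e' w = e w) \<and> (\<forall>w\<in>set (v # vs). e' w \<in> univ S) \<and> sat S e' \<phi>"
      using e'(3) by blast
  next
    assume "\<exists>e'. (\<forall>w. w \<notin> set (v # vs) \<longrightarrow> e' w = e w) \<and> (\<forall>w\<in>set (v # vs). e' w \<in> univ S) \<and> sat S e' \<phi>"
    then obtain e' where e': "\<forall>w. w \<notin> set (v # vs) \<longrightarrow> e' w = e w" "\<forall>w\<in>set (v # vs). e' w \<in> univ S" "sat S e' \<phi>"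
      by blast
    have "\<forall>w. w \<notin> set vs \<longrightarrow> e' w = (e(v := e' v)) w" using e'(1) by auto
    moreover have "\<forall>w\<in>set vs. e' w \<in> univ S" using e'(2) by auto
    ultimately have "sat S (e(v := e' v)) (foldr Ex vs \<phi>)" using Cons.IH e'(3) by blast
    moreover have "e' v \<in> univ S" using e'(2) by auto
    ultimately show "sat S e (foldr Ex (v # vs) \<phi>)" by auto
  qed
qed

definition PG :: "('a, 'f, 'r) struc \<Rightarrow> ('f, 'r, 'i + nat, 'a) fm set \<Rightarrow> ('i \<times> 'a) set \<Rightarrow> bool" where
  "PG C \<Phi> G \<longleftrightarrow> (\<forall>F G0. finite F \<longrightarrow> F \<subseteq> \<Phi> \<longrightarrow> finite G0 \<longrightarrow> G0 \<subseteq> G \<longrightarrow>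
     (\<exists>e. range e \<subseteq> univ C \<and> (\<forall>(j, a)\<in>G0. e (Inl j) = a) \<and> (\<forall>\<phi>\<in>F. sat C e \<phi>)))"

lemma lform_mono: "lform C A \<phi> \<Longrightarrow> A \<subseteq> B \<Longrightarrow> lform C B \<phi>"
  unfolding lform_def by auto

lemma extend_step:
  fixes C :: "('a, 'f, 'r) struc" and \<kappa> :: "'k rel" and \<Phi> :: "('f, 'r, 'i + nat, 'a) fm set"
  assumes mon: "monster C \<kappa>" and si: "small \<kappa> (UNIV :: 'i set)"
    and A: "A \<subseteq> univ C" "small \<kappa> A" and lf: "\<forall>\<phi>\<in>\<Phi>. lform C A \<phi>"
    and pg: "PG C \<Phi> G" and k: "k \<notin> Domain G"
  shows "\<exists>c. PG C \<Phi> (insert (k, c) G)"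
proof -
  have ok: "struct_ok C" and co: "Card_order \<kappa>" and sn: "small \<kappa> (UNIV :: nat set)"
    and sat: "saturated \<kappa> C"
    using mon unfolding monster_def by auto
  have pgE: "\<exists>e. range e \<subseteq> univ C \<and> (\<forall>(j, a)\<in>G0. e (Inl j) = a) \<and> (\<forall>\<phi>\<in>F. sat C e \<phi>)"
    if "finite F" "F \<subseteq> \<Phi>" "finite G0" "G0 \<subseteq> G" for F G0
    using pg that unfolding PG_def by blast
  have func: "a = a'" if ja: "(j, a) \<in> G" "(j, a') \<in> G" for j a a'
  proof -
    have "\<exists>e. range e \<subseteq> univ C \<and> (\<forall>(j', b)\<in>{(j, a), (j, a')}. e (Inl j') = b) \<and> (\<forall>\<phi>\<in>({} :: ('f, 'r, 'i + nat, 'a) fm set). sat C e \<phi>)"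
      by (rule pgE) (use ja in auto)
    then show ?thesis by auto
  qed
  have RG: "Range G \<subseteq> univ C"
  proof
    fix a assume "a \<in> Range G" then obtain j where j: "(j, a) \<in> G" by auto
    have "\<exists>e. range e \<subseteq> univ C \<and> (\<forall>(j', b)\<in>{(j, a)}. e (Inl j') = b) \<and> (\<forall>\<phi>\<in>({} :: ('f, 'r, 'i + nat, 'a) fm set). sat C e \<phi>)"
      by (rule pgE) (use j in auto)
    then obtain e :: "'i + nat \<Rightarrow> 'a" where "range e \<subseteq> univ C" "e (Inl j) = a" by auto
    then show "a \<in> univ C" by (metis range_subsetD)
  qed
  define g where "g j = (SOME a. (j, a) \<in> G)" for j
  have "Range G \<subseteq> range g"
  proof
    fix a assume "a \<in> Range G" then obtain j where j: "(j, a) \<in> G" by auto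
    then have "(j, g j) \<in> G" unfolding g_def by (rule someI)
    then have "g j = a" using func j by blast
    then show "a \<in> range g" by auto
  qed
  then have sRG: "small \<kappa> (Range G)" using small_subset small_range[OF si] by blast
  define A' where "A' = A \<union> Range G"
  have A': "A' \<subseteq> univ C" "small \<kappa> A'"
    using A RG small_Un[OF co sn A(2) sRG] unfolding A'_def by auto
  define eqf :: "'i \<times> 'a \<Rightarrow> ('f, 'r, 'i + nat, 'a) fm" where
    "eqf p = Eq (Var (Inl (fst p))) (Par (snd p))" for p
  have inj_eqf: "inj eqf" unfolding eqf_def inj_def by auto
  have sat_eqf: "sat C e (eqf (j, a)) = (e (Inl j) = a)" for e j a unfolding eqf_def by simp
  define \<Phi>' where "\<Phi>' = \<Phi> \<union> eqf ` G"
  have L\<Phi>': "\<forall>\<phi>\<in>\<Phi>'. lform C A' \<phi>"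
  proof
    fix \<phi> assume "\<phi> \<in> \<Phi>'"
    then consider "\<phi> \<in> \<Phi>" | p where "p \<in> G" "\<phi> = eqf p" unfolding \<Phi>'_def by auto
    then show "lform C A' \<phi>"
    proof cases
      case 1 then show ?thesis using lf lform_mono[of C A \<phi> A'] unfolding A'_def by auto
    next
      case 2 then show ?thesis unfolding lform_def eqf_def A'_def by (cases p) force
    qed
  qed
  have fs\<Phi>': "finsat C \<Phi>'" unfolding finsat_def
  proof (intro allI impI)
    fix F assume F: "finite F" "F \<subseteq> \<Phi>'"
    define G0 where "G0 = G \<inter> eqf -` F"
    have "finite G0" unfolding G0_def using finite_vimageI[OF F(1) inj_eqf] by auto
    then obtain e where e: "range e \<subseteq> univ C" "\<forall>(j, a)\<in>G0. e (Inl j) = a" "\<forall>\<phi>\<in>F \<inter> \<Phi>. sat C e \<phi>"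
      using pgE[of "F \<inter> \<Phi>" G0] F(1) unfolding G0_def by auto
    have "\<forall>\<phi>\<in>F. sat C e \<phi>"
    proof
      fix \<phi> assume \<phi>: "\<phi> \<in> F"
      show "sat C e \<phi>"
      proof (cases "\<phi> \<in> \<Phi>")
        case True then show ?thesis using e \<phi> by auto
      next
        case False
        then obtain p where p: "p \<in> G" "\<phi> = eqf p" using \<phi> F(2) unfolding \<Phi>'_def by auto
        then have "p \<in> G0" unfolding G0_def using \<phi> by auto
        then show ?thesis using e(2) p(2) by (cases p) (auto simp: sat_eqf)
      qed
    qed
    then show "\<exists>e. range e \<subseteq> univ C \<and> (\<forall>\<phi>\<in>F. sat C e \<phi>)" using e(1) by blast
  qed
  have Ln: "lform C A' (Neg \<phi>)" if "lform C A' \<phi>" for \<phi> :: "('f, 'r, 'i + nat, 'a) fm"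
    using that unfolding lform_def by auto
  obtain \<Psi> where \<Psi>: "\<Phi>' \<subseteq> \<Psi>" "\<forall>\<phi>\<in>\<Psi>. lform C A' \<phi>" "finsat C \<Psi>"
      "\<forall>\<phi>. lform C A' \<phi> \<longrightarrow> \<phi> \<in> \<Psi> \<or> Neg \<phi> \<in> \<Psi>"
    using max_finsat[OF fs\<Phi>' L\<Phi>' Ln] by blast
  have fsE: "\<exists>e. range e \<subseteq> univ C \<and> (\<forall>\<phi>\<in>F. sat C e \<phi>)" if "finite F" "F \<subseteq> \<Psi>" for F
    using \<Psi>(3) that unfolding finsat_def by blast
  define \<sigma>k :: "unit + nat \<Rightarrow> ('f, 'i + nat, 'a) trm" where
    "\<sigma>k = case_sum (\<lambda>_. Var (Inl k)) (\<lambda>n. Var (Inr n))"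
  define bk :: "('f, 'r, unit + nat, 'a) fm \<Rightarrow> ('f, 'r, 'i + nat, 'a) fm" where
    "bk \<chi> = trf Inr 0 \<sigma>k \<chi>" for \<chi>
  have \<sigma>kI: "\<forall>v\<in>fv \<chi>. \<sigma>k v = Var (Inl k)" if "fv \<chi> \<subseteq> range Inl" for \<chi> :: "('f, 'r, unit + nat, 'a) fm"
    using that unfolding \<sigma>k_def by auto
  have bk_sat: "sat C e (bk \<chi>) = sat C (\<lambda>v. e (Inl k)) \<chi>" if "fv \<chi> \<subseteq> range Inl" for e \<chi>
    unfolding bk_def by (rule sat_trf) (use \<sigma>kI[OF that] in auto)
  have bk_lform: "lform C A' (bk \<chi>)" if "lform C A' \<chi>" for \<chi>
  proof -
    have s: "\<forall>v\<in>fv \<chi>. \<sigma>k v = Var (Inl k)" using \<sigma>kI that unfolding lform_def by blast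
    have "wff C (bk \<chi>)" unfolding bk_def
      by (rule wff_trf) (use that in \<open>auto simp: lform_def \<sigma>k_def split: sum.splits\<close>)
    moreover have "fv (bk \<chi>) \<subseteq> range Inl"
    proof -
      have "(\<Union>v\<in>fv \<chi>. fvt (\<sigma>k v)) \<subseteq> {Inl k}" using s by auto
      then show ?thesis using fv_trf[of Inr 0 \<sigma>k \<chi>] unfolding bk_def by blast
    qed
    moreover have "params (bk \<chi>) \<subseteq> A'"
      using params_trf[of Inr 0 \<sigma>k \<chi>] that s unfolding bk_def lform_def by auto
    ultimately show ?thesis unfolding lform_def by blast
  qed
  have bk_neg: "bk (Neg \<chi>) = Neg (bk \<chi>)" for \<chi> unfolding bk_def by simp
  define q1 where "q1 = {\<chi> :: ('f, 'r, unit + nat, 'a) fm. lform C A' \<chi> \<and> bk \<chi> \<in> \<Psi>}"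
  have ct: "ctype C A' q1" unfolding ctype_def
  proof (intro conjI allI impI ballI)
    fix \<chi> assume "\<chi> \<in> q1" then show "lform C A' \<chi>" unfolding q1_def by auto
  next
    fix F assume F: "finite F" "F \<subseteq> q1"
    then obtain e where e: "range e \<subseteq> univ C" "\<forall>\<phi>\<in>bk ` F. sat C e \<phi>"
      using fsE[of "bk ` F"] unfolding q1_def by auto
    have "\<forall>\<chi>\<in>F. sat C (\<lambda>v. e (Inl k)) \<chi>"
    proof
      fix \<chi> assume "\<chi> \<in> F"
      then have "sat C e (bk \<chi>)" "fv \<chi> \<subseteq> range Inl" using e(2) F(2) unfolding q1_def lform_def by auto
      then show "sat C (\<lambda>v. e (Inl k)) \<chi>" using bk_sat by blast
    qed
    moreover have "range (\<lambda>v::unit + nat. e (Inl k)) \<subseteq> univ C" using e(1) by auto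
    ultimately show "\<exists>e. range e \<subseteq> univ C \<and> (\<forall>\<phi>\<in>F. sat C e \<phi>)" by blast
  next
    fix \<chi> :: "('f, 'r, unit + nat, 'a) fm" assume l: "lform C A' \<chi>"
    then have "bk \<chi> \<in> \<Psi> \<or> Neg (bk \<chi>) \<in> \<Psi>" using \<Psi>(4) bk_lform by blast
    moreover have "lform C A' (Neg \<chi>)" using l unfolding lform_def by auto
    ultimately show "\<chi> \<in> q1 \<or> Neg \<chi> \<in> q1" using l by (auto simp: q1_def bk_neg)
  qed
  obtain c' where c': "realizes C q1 c'"
    using sat[unfolded saturated_def, rule_format, OF A' ct] by blast
  define c where "c = c' ()"
  have c: "c \<in> univ C" using c' unfolding realizes_def c_def by auto
  have "PG C \<Phi> (insert (k, c) G)" unfolding PG_def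
  proof (intro allI impI)
    fix F G0 assume F: "finite F" "F \<subseteq> \<Phi>" and G0: "finite G0" "G0 \<subseteq> insert (k, c) G"
    define G1 where "G1 = G0 - {(k, c)}"
    have G1: "finite G1" "G1 \<subseteq> G" using G0 unfolding G1_def by auto
    define F' where "F' = F \<union> eqf ` G1"
    have F': "finite F'" "F' \<subseteq> \<Psi>" using F G1 \<Psi>(1) unfolding F'_def \<Phi>'_def by blast+
    obtain fl where fl: "set fl = F'" using finite_list[OF F'(1)] by blast
    define T :: "('f, 'r, 'i + nat, 'a) fm" where "T = Eq (Var (Inl k)) (Var (Inl k))"
    define \<theta>c where "\<theta>c = foldr Conj fl T"
    obtain W where W: "set W = fv \<theta>c - {Inl k}"
      using finite_list[of "fv \<theta>c - {Inl k}"] finite_fv by blast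
    define \<theta> where "\<theta> = foldr Ex W \<theta>c"
    have fv\<theta>: "fv \<theta> \<subseteq> {Inl k}" unfolding \<theta>_def fv_exs W by auto
    have l\<theta>: "lform C A' \<theta>"
    proof -
      have lF: "\<forall>\<phi>\<in>F'. lform C A' \<phi>" using F'(2) \<Psi>(2) by auto
      have "wff C \<theta>" unfolding \<theta>_def \<theta>c_def wff_exs wff_conj fl T_def using lF
        unfolding lform_def by auto
      moreover have "params \<theta> \<subseteq> A'" unfolding \<theta>_def \<theta>c_def params_exs params_conj fl T_def
        using lF unfolding lform_def by auto
      ultimately show ?thesis using fv\<theta> unfolding lform_def by auto
    qed
    have sat\<theta>: "sat C e \<theta>" if "range e \<subseteq> univ C" "\<forall>\<phi>\<in>F'. sat C e \<phi>" for e
    proof -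
      have "sat C e \<theta>c" unfolding \<theta>c_def sat_conj fl T_def using that(2) by simp
      then show ?thesis unfolding \<theta>_def sat_exs using that(1) by blast
    qed
    have \<theta>\<Psi>: "\<theta> \<in> \<Psi>"
    proof (rule ccontr)
      assume "\<theta> \<notin> \<Psi>"
      then have "Neg \<theta> \<in> \<Psi>" using \<Psi>(4) l\<theta> by blast
      then obtain e where e: "range e \<subseteq> univ C" "\<forall>\<phi>\<in>insert (Neg \<theta>) F'. sat C e \<phi>"
        using fsE[of "insert (Neg \<theta>) F'"] F' by auto
      then show False using sat\<theta>[of e] by auto
    qed
    define \<chi> :: "('f, 'r, unit + nat, 'a) fm" where "\<chi> = trf Inr 0 (\<lambda>v. Var (Inl ())) \<theta>"
    have \<chi>sat: "sat C e2 \<chi> = sat C (\<lambda>v. e2 (Inl ())) \<theta>" for e2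
      unfolding \<chi>_def by (rule sat_trf) auto
    have l\<chi>: "lform C A' \<chi>"
    proof -
      have "wff C \<chi>" unfolding \<chi>_def by (rule wff_trf) (use l\<theta> in \<open>auto simp: lform_def\<close>)
      moreover have "fv \<chi> \<subseteq> range Inl"
      proof -
        have "(\<Union>v\<in>fv \<theta>. fvt ((\<lambda>v. Var (Inl ())) v :: ('f, unit + nat, 'a) trm)) \<subseteq> {Inl ()}" by auto
        then show ?thesis using fv_trf[of Inr 0 "\<lambda>v. Var (Inl ())" \<theta>] unfolding \<chi>_def by blast
      qed
      moreover have "params \<chi> \<subseteq> A'"
        using params_trf[of Inr 0 "\<lambda>v. Var (Inl ())" \<theta>] l\<theta> unfolding \<chi>_def lform_def by auto
      ultimately show ?thesis unfolding lform_def by blast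
    qed
    have "bk \<chi> \<in> \<Psi>"
    proof (rule ccontr)
      assume "bk \<chi> \<notin> \<Psi>"
      then have "Neg (bk \<chi>) \<in> \<Psi>" using \<Psi>(4) bk_lform[OF l\<chi>] by blast
      then obtain e where e: "range e \<subseteq> univ C" "\<forall>\<phi>\<in>{\<theta>, Neg (bk \<chi>)}. sat C e \<phi>"
        using fsE[of "{\<theta>, Neg (bk \<chi>)}"] \<theta>\<Psi> by auto
      have "sat C e (bk \<chi>) = sat C (\<lambda>v. e (Inl k)) \<chi>"
        by (rule bk_sat) (use l\<chi> in \<open>auto simp: lform_def\<close>)
      also have "\<dots> = sat C (\<lambda>v. e (Inl k)) \<theta>" by (simp add: \<chi>sat)
      also have "\<dots> = sat C e \<theta>" by (rule sat_cong) (use fv\<theta> in auto)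
      finally show False using e by simp
    qed
    then have "\<chi> \<in> q1" unfolding q1_def using l\<chi> by auto
    then have "sat C (tup_asg C c') \<chi>" using c' unfolding realizes_def by auto
    then have "sat C (\<lambda>v. c) \<theta>" unfolding \<chi>sat c_def by simp
    then obtain e' where e': "\<forall>w. w \<notin> set W \<longrightarrow> e' w = c" "\<forall>w\<in>set W. e' w \<in> univ C" "sat C e' \<theta>c"
      unfolding \<theta>_def sat_exs by blast
    have re': "range e' \<subseteq> univ C"
    proof
      fix x assume "x \<in> range e'" then obtain w where w: "x = e' w" by auto
      show "x \<in> univ C" using e' c w by (cases "w \<in> set W") auto
    qed
    have ek: "e' (Inl k) = c" using e'(1) W by auto
    have sF': "\<forall>\<phi>\<in>F'. sat C e' \<phi>" using e'(3) unfolding \<theta>c_def sat_conj fl by simp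
    have eG: "e' (Inl j) = a" if "(j, a) \<in> G0" for j a
    proof (cases "(j, a) = (k, c)")
      case True then show ?thesis using ek by simp
    next
      case False then have "(j, a) \<in> G1" using that unfolding G1_def by auto
      then have "eqf (j, a) \<in> F'" unfolding F'_def by auto
      then show ?thesis using sF' sat_eqf by blast
    qed
    show "\<exists>e. range e \<subseteq> univ C \<and> (\<forall>(j, a)\<in>G0. e (Inl j) = a) \<and> (\<forall>\<phi>\<in>F. sat C e \<phi>)"
      using re' eG sF' unfolding F'_def by blast
  qed
  then show ?thesis by blast
qed

lemma realize:
  fixes C :: "('a, 'f, 'r) struc" and \<kappa> :: "'k rel" and \<Phi> :: "('f, 'r, 'i + nat, 'a) fm set"
  assumes mon: "monster C \<kappa>" and si: "small \<kappa> (UNIV :: 'i set)"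
    and A: "A \<subseteq> univ C" "small \<kappa> A" and lf: "\<forall>\<phi>\<in>\<Phi>. lform C A \<phi>"
    and fs: "finsat C \<Phi>"
  shows "\<exists>b. range b \<subseteq> univ C \<and> (\<forall>\<phi>\<in>\<Phi>. sat C (tup_asg C b) \<phi>)"
proof -
  define Z where "Z = {G. PG C \<Phi> G}"
  have "{} \<in> Z" using fs unfolding Z_def PG_def finsat_def by auto
  then have ne: "Z \<noteq> {}" by auto
  have ch: "\<Union>ch \<in> Z" if chne: "ch \<noteq> {}" and chs: "subset.chain Z ch" for ch
  proof -
    have sub: "ch \<subseteq> Z" using chs unfolding subset_chain_def by auto
    have "PG C \<Phi> (\<Union>ch)" unfolding PG_def
    proof (intro allI impI)
      fix F G0 assume a: "finite F" "F \<subseteq> \<Phi>" "finite G0" "G0 \<subseteq> \<Union>ch"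
      obtain B where B: "B \<in> ch" "G0 \<subseteq> B" using finite_subset_Union_chain[OF a(3,4) chne chs] by blast
      have "PG C \<Phi> B" using sub B(1) unfolding Z_def by auto
      then show "\<exists>e. range e \<subseteq> univ C \<and> (\<forall>(j, a)\<in>G0. e (Inl j) = a) \<and> (\<forall>\<phi>\<in>F. sat C e \<phi>)"
        using a(1-3) B(2) unfolding PG_def by blast
    qed
    then show ?thesis unfolding Z_def by simp
  qed
  obtain G where G: "G \<in> Z" and mx: "\<forall>X\<in>Z. G \<subseteq> X \<longrightarrow> X = G"
    using subset_Zorn_nonempty[OF ne ch] by blast
  have pg: "PG C \<Phi> G" using G unfolding Z_def by simp
  have pgE: "\<exists>e. range e \<subseteq> univ C \<and> (\<forall>(j, a)\<in>G0. e (Inl j) = a) \<and> (\<forall>\<phi>\<in>F. sat C e \<phi>)"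
    if "finite F" "F \<subseteq> \<Phi>" "finite G0" "G0 \<subseteq> G" for F G0
    using pg that unfolding PG_def by blast
  have dom: "k \<in> Domain G" for k
  proof (rule ccontr)
    assume nk: "k \<notin> Domain G"
    then obtain c where "PG C \<Phi> (insert (k, c) G)" using extend_step[OF mon si A lf pg] by blast
    then have "insert (k, c) G = G" using mx unfolding Z_def by blast
    then show False using nk by auto
  qed
  define b where "b j = (SOME a. (j, a) \<in> G)" for j
  have bG: "(j, b j) \<in> G" for j
  proof -
    obtain a where "(j, a) \<in> G" using dom[of j] by auto
    then show ?thesis unfolding b_def by (rule someI)
  qed
  have rb: "range b \<subseteq> univ C"
  proof
    fix x assume "x \<in> range b" then obtain j where j: "x = b j" by auto
    have "\<exists>e. range e \<subseteq> univ C \<and> (\<forall>(j', a)\<in>{(j, b j)}. e (Inl j') = a) \<and> (\<forall>\<phi>\<in>({} :: ('f, 'r, 'i + nat, 'a) fm set). sat C e \<phi>)"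
      by (rule pgE) (use bG in auto)
    then obtain e :: "'i + nat \<Rightarrow> 'a" where "range e \<subseteq> univ C" "e (Inl j) = b j" by auto
    then show "x \<in> univ C" using j by (metis range_subsetD)
  qed
  have "sat C (tup_asg C b) \<phi>" if \<phi>: "\<phi> \<in> \<Phi>" for \<phi>
  proof -
    define G0 where "G0 = (\<lambda>j. (j, b j)) ` (Inl -` fv \<phi>)"
    have fG0: "finite G0" unfolding G0_def using finite_vimageI[OF finite_fv inj_Inl] by blast
    have sG0: "G0 \<subseteq> G" unfolding G0_def using bG by auto
    obtain e where e: "\<forall>(j, a)\<in>G0. e (Inl j) = a" "sat C e \<phi>"
      using pgE[OF _ _ fG0 sG0, of "{\<phi>}"] \<phi> by auto
    have "sat C e \<phi> = sat C (tup_asg C b) \<phi>"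
    proof (rule sat_cong, rule ballI)
      fix v assume v: "v \<in> fv \<phi>"
      then obtain j where j: "v = Inl j" using lf \<phi> unfolding lform_def by auto
      then have "(j, b j) \<in> G0" using v unfolding G0_def by auto
      then show "e v = tup_asg C b v" using e(1) j by auto
    qed
    then show ?thesis using e(2) by simp
  qed
  then show ?thesis using rb by blast
qed

lemma core:
  fixes C :: "('a, 'f, 'r) struc" and \<kappa> :: "'k rel" and q :: "('f, 'r, 'i + nat, 'a) fm set"
    and \<alpha> :: "'i \<Rightarrow> 'a"
  assumes mon: "monster C \<kappa>" and si: "small \<kappa> (UNIV :: 'i set)"
    and ctq: "ctype C (univ C) q" and es: "elem_sub C M" and sM: "small \<kappa> M"
    and r\<alpha>: "realizes C (restr q M) \<alpha>"
    and \<sigma>B: "\<sigma> \<in> A_set C (restr q (range \<alpha>)) \<alpha>"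
  shows "\<exists>N. elem_sub C N \<and> small \<kappa> N \<and> tp_eq C N \<alpha> (\<sigma> \<circ> \<alpha>)"
proof -
  have ok: "struct_ok C" and co: "Card_order \<kappa>" and sn: "small \<kappa> (UNIV :: nat set)"
    using mon unfolding monster_def by auto
  have M: "M \<subseteq> univ C" using es unfolding elem_sub_def by auto
  have ra: "range \<alpha> \<subseteq> univ C" using r\<alpha> unfolding realizes_def by auto
  have au: "aut C \<sigma>" and rs: "realizes C (restr q (range \<alpha>)) (\<sigma> \<circ> \<alpha>)"
    using \<sigma>B unfolding A_set_def by auto
  have rsa: "range (\<sigma> \<circ> \<alpha>) \<subseteq> univ C" using rs unfolding realizes_def by auto
  define A where "A = M \<union> range \<alpha>"
  have A: "A \<subseteq> univ C" "small \<kappa> A"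
    using M ra small_Un[OF co sn sM small_range[OF si]] unfolding A_def by auto
  define \<Phi> where "\<Phi> = restr q A"
  have lf: "\<forall>\<phi>\<in>\<Phi>. lform C A \<phi>"
    using ctq unfolding \<Phi>_def restr_def ctype_def lform_def by auto
  have fs: "finsat C \<Phi>"
    using ctq unfolding \<Phi>_def restr_def ctype_def finsat_def by auto
  obtain \<gamma> where \<gamma>: "range \<gamma> \<subseteq> univ C" "\<forall>\<phi>\<in>\<Phi>. sat C (tup_asg C \<gamma>) \<phi>"
    using realize[OF mon si A lf fs] by blast
  have tpq: "tp_eq C B c \<gamma>" if B: "B \<subseteq> A" and rc: "realizes C (restr q B) c" for B c
    unfolding tp_eq_def
  proof (intro allI impI)
    fix \<phi> :: "('f, 'r, 'i + nat, 'a) fm" assume l: "lform C B \<phi>"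
    then have "lform C (univ C) \<phi>" using B A(1) unfolding lform_def by auto
    then have "\<phi> \<in> q \<or> Neg \<phi> \<in> q" using ctq unfolding ctype_def by blast
    then show "sat C (tup_asg C c) \<phi> = sat C (tup_asg C \<gamma>) \<phi>"
    proof
      assume "\<phi> \<in> q"
      then have "\<phi> \<in> restr q B" "\<phi> \<in> \<Phi>" using l B unfolding restr_def \<Phi>_def lform_def by auto
      then show ?thesis using rc \<gamma>(2) unfolding realizes_def by auto
    next
      assume "Neg \<phi> \<in> q"
      then have "Neg \<phi> \<in> restr q B" "Neg \<phi> \<in> \<Phi>" using l B unfolding restr_def \<Phi>_def lform_def by auto
      then show ?thesis using rc \<gamma>(2) unfolding realizes_def by fastforce
    qed
  qed
  have t1: "tp_eq C M \<alpha> \<gamma>" by (rule tpq) (use r\<alpha> in \<open>auto simp: A_def\<close>)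
  have t2: "tp_eq C (range \<alpha>) (\<sigma> \<circ> \<alpha>) \<gamma>" by (rule tpq) (use rs in \<open>auto simp: A_def\<close>)
  obtain f where f: "aut C f" "\<forall>x\<in>range \<alpha>. f x = x" "f \<circ> (\<sigma> \<circ> \<alpha>) = \<gamma>"
    using homog[OF mon si ra small_range[OF si] rsa \<gamma>(1) t2] by blast
  define f' where "f' = inv_into (univ C) f"
  have af': "aut C f'" unfolding f'_def by (rule aut_inv[OF ok f(1)])
  have t3: "tp_eq C (f' ` M) (f' \<circ> \<alpha>) (f' \<circ> \<gamma>)"
    by (rule tp_eq_transport[OF ok af' M ra \<gamma>(1) t1])
  have e1: "f' \<circ> \<alpha> = \<alpha>"
  proof
    fix i
    have "\<alpha> i \<in> univ C" "f (\<alpha> i) = \<alpha> i" using ra f(2) by auto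
    then show "(f' \<circ> \<alpha>) i = \<alpha> i" unfolding f'_def using aut_inv_f[OF f(1)] by (metis comp_apply)
  qed
  have e2: "f' \<circ> \<gamma> = \<sigma> \<circ> \<alpha>"
  proof
    fix i
    have "\<sigma> (\<alpha> i) \<in> univ C" using rsa by auto
    moreover have "\<gamma> i = f (\<sigma> (\<alpha> i))" using f(3) by (metis comp_apply)
    ultimately show "(f' \<circ> \<gamma>) i = (\<sigma> \<circ> \<alpha>) i" unfolding f'_def using aut_inv_f[OF f(1)] by simp
  qed
  have "elem_sub C (f' ` M)" by (rule elem_sub_transport[OF ok af' es])
  moreover have "small \<kappa> (f' ` M)" by (rule small_image[OF sM])
  ultimately show ?thesis using t3 e1 e2 by auto
qed

lemma chain_EL:
  fixes C :: "('a, 'f, 'r) struc" and \<kappa> :: "'k rel" and a b :: "'i \<Rightarrow> 'a"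
  assumes mon: "monster C \<kappa>" and si: "small \<kappa> (UNIV :: 'i set)"
    and ch: "lascar_chain C \<kappa> a b n"
  shows "EL C \<kappa> a b"
proof -
  obtain as :: "nat \<Rightarrow> 'i \<Rightarrow> 'a" and Ms where c: "as 0 = a" "as n = b" "\<forall>i\<le>n. range (as i) \<subseteq> univ C"
    "\<forall>i<n. elem_sub C (Ms i) \<and> small \<kappa> (Ms i) \<and> tp_eq C (Ms i) (as i) (as (Suc i))"
    using ch unfolding lascar_chain_def by blast
  have "m \<le> n \<Longrightarrow> \<exists>\<sigma>\<in>autfL C \<kappa>. as m = \<sigma> \<circ> as 0" for m
  proof (induction m)
    case 0
    have "id \<in> autfL C \<kappa>" by (rule autfL.ident)
    then show ?case by (intro bexI[where x=id]) auto
  next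
    case (Suc m)
    have "m \<le> n" using Suc.prems by simp
    then obtain \<sigma> where \<sigma>: "\<sigma> \<in> autfL C \<kappa>" "as m = \<sigma> \<circ> as 0" using Suc.IH by blast
    have m: "m < n" using Suc.prems by auto
    then have h: "elem_sub C (Ms m)" "small \<kappa> (Ms m)" "tp_eq C (Ms m) (as m) (as (Suc m))" using c(4) by auto
    have "Ms m \<subseteq> univ C" using h(1) unfolding elem_sub_def by auto
    moreover have "range (as m) \<subseteq> univ C" "range (as (Suc m)) \<subseteq> univ C" using c(3) m by auto
    ultimately obtain \<tau> where \<tau>: "aut C \<tau>" "\<forall>x\<in>Ms m. \<tau> x = x" "\<tau> \<circ> as m = as (Suc m)"
      using homog[OF mon si _ h(2) _ _ h(3)] by blast
    have "\<tau> \<in> autfL C \<kappa>" using autfL.fix_model[OF \<tau>(1) h(1,2) \<tau>(2)] .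
    then have "\<tau> \<circ> \<sigma> \<in> autfL C \<kappa>" using \<sigma>(1) autfL.comp by blast
    moreover have "as (Suc m) = (\<tau> \<circ> \<sigma>) \<circ> as 0" using \<tau>(3) \<sigma>(2) by (simp add: comp_assoc)
    ultimately show ?case by blast
  qed
  then show ?thesis using c(1,2) unfolding EL_def by blast
qed

lemma aut_id: "aut C id"
  unfolding aut_def by (simp add: bij_betw_id)

theorem lemma5p9:
  fixes C :: "('a, 'f, 'r) struc" and \<kappa> :: "'k rel"
    and p q :: "('f, 'r, 'i + nat, 'a) fm set" and M :: "'a set" and \<alpha> :: "'i \<Rightarrow> 'a"
  assumes "monster C \<kappa>"
    and "small \<kappa> (UNIV :: 'i set)"
    and "ctype C {} p"
    and "ctype C (univ C) q" and "p \<subseteq> q"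
    and "elem_sub C M" and "small \<kappa> M"
    and "realizes C (restr q M) \<alpha>"
  shows "(\<lambda>\<sigma>. \<sigma> \<circ> \<alpha>) `
           {\<sigma>1 \<circ> \<sigma>2 \<circ> inv_into (univ C) \<sigma>3 \<circ> inv_into (univ C) \<sigma>4 | \<sigma>1 \<sigma>2 \<sigma>3 \<sigma>4.
              \<sigma>1 \<in> A_set C (restr q (range \<alpha>)) \<alpha> \<and> \<sigma>2 \<in> A_set C (restr q (range \<alpha>)) \<alpha> \<and>
              \<sigma>3 \<in> A_set C (restr q (range \<alpha>)) \<alpha> \<and> \<sigma>4 \<in> A_set C (restr q (range \<alpha>)) \<alpha>}
         \<subseteq> {\<beta>. range \<beta> \<subseteq> univ C \<and> dL C \<kappa> \<alpha> \<beta> \<le> 4}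
       \<and> {\<beta>. range \<beta> \<subseteq> univ C \<and> dL C \<kappa> \<alpha> \<beta> \<le> 4} \<subseteq> {\<beta>. EL C \<kappa> \<alpha> \<beta>}"
proof
  note mon = assms(1) and si = assms(2) and ctq = assms(4) and es = assms(6) and sM = assms(7)
    and r\<alpha> = assms(8)
  have ok: "struct_ok C" using mon unfolding monster_def by auto
  have ra: "range \<alpha> \<subseteq> univ C" using r\<alpha> unfolding realizes_def by auto
  let ?B = "A_set C (restr q (range \<alpha>)) \<alpha>"
  have autB: "aut C \<sigma>" if "\<sigma> \<in> ?B" for \<sigma> using that unfolding A_set_def by auto
  have segA: "\<exists>N. elem_sub C N \<and> small \<kappa> N \<and> tp_eq C N (\<rho> \<circ> \<alpha>) (\<rho> \<circ> (\<sigma> \<circ> \<alpha>))"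
    if \<rho>: "aut C \<rho>" and \<sigma>: "\<sigma> \<in> ?B" for \<rho> \<sigma>
  proof -
    obtain N0 where N0: "elem_sub C N0" "small \<kappa> N0" "tp_eq C N0 \<alpha> (\<sigma> \<circ> \<alpha>)"
      using core[OF mon si ctq es sM r\<alpha> \<sigma>] by blast
    have "range (\<sigma> \<circ> \<alpha>) \<subseteq> univ C" using ra aut_in[OF autB[OF \<sigma>]] by auto
    then have "tp_eq C (\<rho> ` N0) (\<rho> \<circ> \<alpha>) (\<rho> \<circ> (\<sigma> \<circ> \<alpha>))"
      using tp_eq_transport[OF ok \<rho> _ ra _ N0(3)] N0(1) unfolding elem_sub_def by blast
    then show ?thesis using elem_sub_transport[OF ok \<rho> N0(1)] small_image[OF N0(2)] by blast
  qed
  have segB: "\<exists>N. elem_sub C N \<and> small \<kappa> N \<and>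
      tp_eq C N (\<rho> \<circ> \<alpha>) (\<rho> \<circ> (inv_into (univ C) \<sigma> \<circ> \<alpha>))"
    if \<rho>: "aut C \<rho>" and \<sigma>: "\<sigma> \<in> ?B" for \<rho> \<sigma>
  proof -
    let ?t = "inv_into (univ C) \<sigma>"
    have a\<sigma>: "aut C \<sigma>" using autB[OF \<sigma>] .
    have at: "aut C ?t" by (rule aut_inv[OF ok a\<sigma>])
    obtain N0 where N0: "elem_sub C N0" "small \<kappa> N0" "tp_eq C N0 \<alpha> (\<sigma> \<circ> \<alpha>)"
      using core[OF mon si ctq es sM r\<alpha> \<sigma>] by blast
    have N0u: "N0 \<subseteq> univ C" using N0(1) unfolding elem_sub_def by auto
    have rs: "range (\<sigma> \<circ> \<alpha>) \<subseteq> univ C" using ra aut_in[OF a\<sigma>] by auto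
    have rt: "range (?t \<circ> \<alpha>) \<subseteq> univ C" using ra aut_in[OF at] by auto
    have "tp_eq C (?t ` N0) (?t \<circ> \<alpha>) (?t \<circ> (\<sigma> \<circ> \<alpha>))"
      by (rule tp_eq_transport[OF ok at N0u ra rs N0(3)])
    moreover have "?t \<circ> (\<sigma> \<circ> \<alpha>) = \<alpha>"
    proof
      fix i have "\<alpha> i \<in> univ C" using ra by auto
      then show "(?t \<circ> (\<sigma> \<circ> \<alpha>)) i = \<alpha> i" using aut_inv_f[OF a\<sigma>] by simp
    qed
    ultimately have "tp_eq C (?t ` N0) \<alpha> (?t \<circ> \<alpha>)" using tp_eq_sym by metis
    moreover have "?t ` N0 \<subseteq> univ C" using N0u aut_in[OF at] by auto
    ultimately have "tp_eq C (\<rho> ` ?t ` N0) (\<rho> \<circ> \<alpha>) (\<rho> \<circ> (?t \<circ> \<alpha>))"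
      using tp_eq_transport[OF ok \<rho> _ ra rt] by blast
    moreover have "elem_sub C (\<rho> ` ?t ` N0)"
      by (rule elem_sub_transport[OF ok \<rho> elem_sub_transport[OF ok at N0(1)]])
    moreover have "small \<kappa> (\<rho> ` ?t ` N0)" by (rule small_image[OF small_image[OF N0(2)]])
    ultimately show ?thesis by blast
  qed
  show "(\<lambda>\<sigma>. \<sigma> \<circ> \<alpha>) `
           {\<sigma>1 \<circ> \<sigma>2 \<circ> inv_into (univ C) \<sigma>3 \<circ> inv_into (univ C) \<sigma>4 | \<sigma>1 \<sigma>2 \<sigma>3 \<sigma>4.
              \<sigma>1 \<in> ?B \<and> \<sigma>2 \<in> ?B \<and> \<sigma>3 \<in> ?B \<and> \<sigma>4 \<in> ?B}
         \<subseteq> {\<beta>. range \<beta> \<subseteq> univ C \<and> dL C \<kappa> \<alpha> \<beta> \<le> 4}"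
  proof
    fix \<beta> assume "\<beta> \<in> (\<lambda>\<sigma>. \<sigma> \<circ> \<alpha>) `
           {\<sigma>1 \<circ> \<sigma>2 \<circ> inv_into (univ C) \<sigma>3 \<circ> inv_into (univ C) \<sigma>4 | \<sigma>1 \<sigma>2 \<sigma>3 \<sigma>4.
              \<sigma>1 \<in> ?B \<and> \<sigma>2 \<in> ?B \<and> \<sigma>3 \<in> ?B \<and> \<sigma>4 \<in> ?B}"
    then obtain \<sigma>1 \<sigma>2 \<sigma>3 \<sigma>4 where s: "\<sigma>1 \<in> ?B" "\<sigma>2 \<in> ?B" "\<sigma>3 \<in> ?B" "\<sigma>4 \<in> ?B"
      and \<beta>: "\<beta> = (\<sigma>1 \<circ> \<sigma>2 \<circ> inv_into (univ C) \<sigma>3 \<circ> inv_into (univ C) \<sigma>4) \<circ> \<alpha>"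
      by blast
    define t3 where "t3 = inv_into (univ C) \<sigma>3"
    define t4 where "t4 = inv_into (univ C) \<sigma>4"
    have a1: "aut C \<sigma>1" and a2: "aut C \<sigma>2" and a3: "aut C t3" and a4: "aut C t4"
      using autB s aut_inv[OF ok] unfolding t3_def t4_def by auto
    have a12: "aut C (\<sigma>1 \<circ> \<sigma>2)" by (rule aut_comp[OF ok a1 a2])
    have a123: "aut C (\<sigma>1 \<circ> \<sigma>2 \<circ> t3)" by (rule aut_comp[OF ok a12 a3])
    have a1234: "aut C (\<sigma>1 \<circ> \<sigma>2 \<circ> t3 \<circ> t4)" by (rule aut_comp[OF ok a123 a4])
    obtain N1 where N1: "elem_sub C N1" "small \<kappa> N1" "tp_eq C N1 (id \<circ> \<alpha>) (id \<circ> (\<sigma>1 \<circ> \<alpha>))"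
      using segA[OF aut_id s(1)] by blast
    obtain N2 where N2: "elem_sub C N2" "small \<kappa> N2" "tp_eq C N2 (\<sigma>1 \<circ> \<alpha>) (\<sigma>1 \<circ> (\<sigma>2 \<circ> \<alpha>))"
      using segA[OF a1 s(2)] by blast
    obtain N3 where N3: "elem_sub C N3" "small \<kappa> N3"
      "tp_eq C N3 ((\<sigma>1 \<circ> \<sigma>2) \<circ> \<alpha>) ((\<sigma>1 \<circ> \<sigma>2) \<circ> (t3 \<circ> \<alpha>))"
      using segB[OF a12 s(3)] unfolding t3_def by blast
    obtain N4 where N4: "elem_sub C N4" "small \<kappa> N4"
      "tp_eq C N4 ((\<sigma>1 \<circ> \<sigma>2 \<circ> t3) \<circ> \<alpha>) ((\<sigma>1 \<circ> \<sigma>2 \<circ> t3) \<circ> (t4 \<circ> \<alpha>))"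
      using segB[OF a123 s(4)] unfolding t4_def by blast
    define as :: "nat \<Rightarrow> 'i \<Rightarrow> 'a" where
      "as i = (if i = 0 then \<alpha> else if i = 1 then \<sigma>1 \<circ> \<alpha> else if i = 2 then \<sigma>1 \<circ> \<sigma>2 \<circ> \<alpha>
               else if i = 3 then \<sigma>1 \<circ> \<sigma>2 \<circ> t3 \<circ> \<alpha> else \<sigma>1 \<circ> \<sigma>2 \<circ> t3 \<circ> t4 \<circ> \<alpha>)" for i
    define Ms where
      "Ms i = (if i = 0 then N1 else if i = 1 then N2 else if i = 2 then N3 else N4)" for i :: nat
    have rng: "range (\<rho> \<circ> \<alpha>) \<subseteq> univ C" if "aut C \<rho>" for \<rho>
      using ra aut_in[OF that] by auto
    have b4: "\<beta> = as 4" unfolding \<beta> as_def t3_def t4_def by simp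
    have c0: "as 0 = \<alpha>" unfolding as_def by simp
    have cr: "\<forall>i\<le>4. range (as i) \<subseteq> univ C"
    proof (intro allI impI)
      fix i :: nat assume "i \<le> 4"
      then consider "i = 0" | "i = 1" | "i = 2" | "i = 3" | "i = 4" by linarith
      then show "range (as i) \<subseteq> univ C"
      proof cases
        case 1 then show ?thesis using ra unfolding as_def by simp
      next
        case 2 then show ?thesis using rng[OF a1] unfolding as_def by simp
      next
        case 3 then show ?thesis using rng[OF a12] unfolding as_def by simp
      next
        case 4 then show ?thesis using rng[OF a123] unfolding as_def by simp
      next
        case 5 then show ?thesis using rng[OF a1234] unfolding as_def by simp
      qed
    qed
    have cm: "\<forall>i<4. elem_sub C (Ms i) \<and> small \<kappa> (Ms i) \<and> tp_eq C (Ms i) (as i) (as (Suc i))"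
    proof (intro allI impI)
      fix i :: nat assume "i < 4"
      then consider "i = 0" | "i = 1" | "i = 2" | "i = 3" by linarith
      then show "elem_sub C (Ms i) \<and> small \<kappa> (Ms i) \<and> tp_eq C (Ms i) (as i) (as (Suc i))"
      proof cases
        case 1 then show ?thesis using N1 unfolding as_def Ms_def by simp
      next
        case 2 then show ?thesis using N2 unfolding as_def Ms_def by (simp add: comp_assoc)
      next
        case 3 then show ?thesis using N3 unfolding as_def Ms_def by (simp add: comp_assoc)
      next
        case 4 then show ?thesis using N4 unfolding as_def Ms_def by (simp add: comp_assoc)
      qed
    qed
    have "lascar_chain C \<kappa> \<alpha> \<beta> 4" unfolding lascar_chain_def
      by (rule exI[of _ as], rule exI[of _ Ms]) (use c0 b4 cr cm in simp)
    then have ch4: "lascar_chain C \<kappa> \<alpha> \<beta> 4" .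
    have L: "(LEAST n. lascar_chain C \<kappa> \<alpha> \<beta> n) \<le> 4" by (rule Least_le) (rule ch4)
    have "dL C \<kappa> \<alpha> \<beta> = enat (LEAST n. lascar_chain C \<kappa> \<alpha> \<beta> n)"
      unfolding dL_def using ch4 by auto
    also have "\<dots> \<le> enat 4" using L by simp
    also have "enat 4 = 4" by (simp add: numeral_eq_enat)
    finally have "dL C \<kappa> \<alpha> \<beta> \<le> 4" .
    moreover have "range \<beta> \<subseteq> univ C" using rng[OF a1234] unfolding \<beta> t3_def t4_def by simp
    ultimately show "\<beta> \<in> {\<beta>. range \<beta> \<subseteq> univ C \<and> dL C \<kappa> \<alpha> \<beta> \<le> 4}" by blast
  qed
next
  note mon = assms(1) and si = assms(2)
  show "{\<beta>. range \<beta> \<subseteq> univ C \<and> dL C \<kappa> \<alpha> \<beta> \<le> 4} \<subseteq> {\<beta>. EL C \<kappa> \<alpha> \<beta>}"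
  proof
    fix \<beta> assume "\<beta> \<in> {\<beta>. range \<beta> \<subseteq> univ C \<and> dL C \<kappa> \<alpha> \<beta> \<le> 4}"
    then have "dL C \<kappa> \<alpha> \<beta> \<le> 4" by auto
    then obtain n where "lascar_chain C \<kappa> \<alpha> \<beta> n" unfolding dL_def by (auto split: if_splits)
    then show "\<beta> \<in> {\<beta>. EL C \<kappa> \<alpha> \<beta>}" using chain_EL[OF mon si] by blast
  qed
qed

end
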